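(* Let $m\ge 2$ be an integer and let $T_m$ be the $m$-th Chebyshev polynomial, viewed as a map $T_m:\mathbb{Z}_2\to\mathbb{Z}_2$. (i) If $m$ is even, then $1$ is an attracting fixed point of $T_m$, and every $x\in\mathbb{Z}_2$ lies in its attracting basin, i.e. $\lim_{k\to\infty}T_m^{k}(x)=1$ for all $x\in\mathbb{Z}_2$. (ii) If $m$ is odd, let $s=s(m)\ge 2$ be as defined in the context. Then $\mathbb{Z}_2$ decomposes as the disjoint union $$\mathbb{Z}_2=\{0,1,-1\}\sqcup E_1\sqcup E_2\sqcup E_3,$$ where $$E_1=\bigsqcup_{n\ge1}\bigsqcup_{0\le i<2^{s-1}}E_1(n,i),\qquad E_2=\bigsqcup_{n\ge2}\bigsqcup_{0\le i<2^{s}}E_2(n,i),\qquad E_3=\bigsqcup_{n\ge2}\bigsqcup_{0\le i<2^{s}}E_3(n,i),$$ with $$E_1(n,i)=2^n(1+2i)+2^{n+s}\mathbb{Z}_2\ (n\ge1,\ 0\le i<2^{s-1}),$$ $$E_2(n,i)=1+2^n(1+2i)+2^{n+s+1}\mathbb{Z}_2\ (n\ge2,\ 0\le i<2^{s}),$$ $$E_3(n,i)=-1+2^n(1+2i)+2^{n+s+1}\mathbb{Z}_2\ (n\ge2,\ 0\le i<2^{s}).$$ The points $0,1,-1$ are fixed points of $T_m$, and each set $E_1(n,i)$, $E_2(n,i)$, $E_3(n,i)$ is invariant under $T_m$ and the restriction of $T_m$ to it is minimal (every orbit in it is dense in it).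
   Context: $\mathbb{Z}_2$ denotes the ring of $2$-adic integers. For an integer $m\ge0$, the $m$-th Chebyshev polynomial is $$T_m(x)=\sum_{k=0}^{\lfloor m/2\rfloor}(-1)^k\frac{m}{m-k}\binom{m-k}{k}2^{m-2k-1}x^{m-2k}.$$ For an odd integer $m\ge3$, define $s(m)=\max\{n\ge2:\ 2^n\mid(m+1)\text{ or }2^n\mid(m-1)\}$; equivalently, $m=2^{s}q+1$ or $m=2^{s}q-1$ with $q\ge1$ odd and $s=s(m)\ge 2$. $T_m^k$ denotes the $k$-th iterate of $T_m$. A continuous map $f:E\to E$ is minimal if every orbit is dense in $E$. *)

theory Defs
  imports Complex_Main
begin

text \<open>The ring of 2-adic integers, realised as the inverse limit of the rings Z/2^n Z:
  a 2-adic integer is a compatible sequence of residues x n in [0, 2^n).\<close>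

definition Z2 :: "(nat \<Rightarrow> int) set" where
  "Z2 = {x. (\<forall>n. 0 \<le> x n \<and> x n < 2 ^ n) \<and> (\<forall>n. x (Suc n) mod 2 ^ n = x n)}"

definition z2_of_int :: "int \<Rightarrow> nat \<Rightarrow> int" where
  "z2_of_int c = (\<lambda>n. c mod 2 ^ n)"

definition z2_add :: "(nat \<Rightarrow> int) \<Rightarrow> (nat \<Rightarrow> int) \<Rightarrow> nat \<Rightarrow> int" where
  "z2_add x y = (\<lambda>n. (x n + y n) mod 2 ^ n)"

definition z2_mul :: "(nat \<Rightarrow> int) \<Rightarrow> (nat \<Rightarrow> int) \<Rightarrow> nat \<Rightarrow> int" where
  "z2_mul x y = (\<lambda>n. (x n * y n) mod 2 ^ n)"

definition z2_dist :: "(nat \<Rightarrow> int) \<Rightarrow> (nat \<Rightarrow> int) \<Rightarrow> real" where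
  "z2_dist x y = (if x = y then 0 else (1/2) ^ (GREATEST n. x n = y n))"

definition cheb :: "nat \<Rightarrow> real \<Rightarrow> real" where
  "cheb m x = (\<Sum>k = 0..m div 2. (-1) ^ k * (real m / real (m - k)) * real ((m - k) choose k)
       * 2 powr (real m - 2 * real k - 1) * x ^ (m - 2 * k))"

text \<open>T_m on integers (the value of the formula is an integer for integer arguments).\<close>
definition cheb_int :: "nat \<Rightarrow> int \<Rightarrow> int" where
  "cheb_int m a = \<lfloor>cheb m (real_of_int a)\<rfloor>"

text \<open>T_m as a map on Z_2 (the polynomial has integer coefficients, so it acts levelwise).\<close>
definition Tz :: "nat \<Rightarrow> (nat \<Rightarrow> int) \<Rightarrow> nat \<Rightarrow> int" where
  "Tz m x = (\<lambda>n. cheb_int m (x n) mod 2 ^ n)"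

definition s_of :: "nat \<Rightarrow> nat" where
  "s_of m = (GREATEST n. n \<ge> 2 \<and> (2 ^ n dvd m + 1 \<or> 2 ^ n dvd m - 1))"

definition coset2 :: "int \<Rightarrow> nat \<Rightarrow> (nat \<Rightarrow> int) set" where
  "coset2 a k = {z2_add (z2_of_int a) (z2_mul (z2_of_int (2 ^ k)) z) | z. z \<in> Z2}"

definition Epiece :: "nat \<Rightarrow> nat \<times> nat \<times> nat \<Rightarrow> (nat \<Rightarrow> int) set" where
  "Epiece s jni = (case jni of (j, n, i) \<Rightarrow>
     if j = 1 then coset2 (2 ^ n * (1 + 2 * int i)) (n + s)
     else if j = 2 then coset2 (1 + 2 ^ n * (1 + 2 * int i)) (n + s + 1)
     else coset2 (-1 + 2 ^ n * (1 + 2 * int i)) (n + s + 1))"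

definition Eidx :: "nat \<Rightarrow> (nat \<times> nat \<times> nat) set" where
  "Eidx s = {(1, n, i) | n i. n \<ge> 1 \<and> i < 2 ^ (s - 1)}
          \<union> {(2, n, i) | n i. n \<ge> 2 \<and> i < 2 ^ s}
          \<union> {(3, n, i) | n i. n \<ge> 2 \<and> i < 2 ^ s}"

definition minimal_on :: "((nat \<Rightarrow> int) \<Rightarrow> nat \<Rightarrow> int) \<Rightarrow> (nat \<Rightarrow> int) set \<Rightarrow> bool" where
  "minimal_on f E = (\<forall>x\<in>E. \<forall>y\<in>E. \<forall>e>0. \<exists>k. z2_dist ((f ^^ k) x) y < e)"

end

theory Submission
  imports Defs "HOL-Number_Theory.Cong"
begin

fun Tg :: "nat \<Rightarrow> 'a::comm_ring_1 \<Rightarrow> 'a" where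
  "Tg 0 x = 1"
| "Tg (Suc 0) x = x"
| "Tg (Suc (Suc n)) x = 2 * x * Tg (Suc n) x - Tg n x"

fun Sg :: "nat \<Rightarrow> 'a::comm_ring_1 \<Rightarrow> 'a" where
  "Sg 0 x = 0"
| "Sg (Suc 0) x = 1"
| "Sg (Suc (Suc n)) x = 2 * x * Sg (Suc n) x - Sg n x"

fun Pr :: "nat \<Rightarrow> 'a::comm_ring_1 \<Rightarrow> 'a" where
  "Pr 0 y = 1"
| "Pr (Suc 0) y = y"
| "Pr (Suc (Suc n)) y = y * Pr (Suc n) y - Pr n y"

lemma nat_induct2: "P 0 \<Longrightarrow> P (Suc 0) \<Longrightarrow> (\<And>n. P n \<Longrightarrow> P (Suc n) \<Longrightarrow> P (Suc (Suc n))) \<Longrightarrow> P n"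
proof (induction n rule: less_induct)
  case (less n)
  show ?case
  proof (cases n)
    case (Suc k) then show ?thesis using less by (cases k) auto
  qed (use less in auto)
qed

lemma TS_step: "Tg (Suc a) x = x * Tg a x - (1 - x^2) * Sg a x \<and> Sg (Suc a) x = x * Sg a x + Tg a x"
proof (induction a rule: nat_induct2)
  case (3 n)
  then have eT: "Tg (Suc n) x = x * Tg n x - (1 - x^2) * Sg n x"
    and eS: "Sg (Suc n) x = x * Sg n x + Tg n x" by auto
  show ?case unfolding Tg.simps Sg.simps eT eS by (simp add: algebra_simps power2_eq_square)
qed (auto simp: algebra_simps power2_eq_square)

lemma T_step: "Tg (Suc a) x = x * Tg a x - (1 - x^2) * Sg a x" using TS_step by blast
lemma S_step: "Sg (Suc a) x = x * Sg a x + Tg a x" using TS_step by blast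

lemma pell: "Tg a x ^ 2 + (1 - x^2) * Sg a x ^ 2 = 1"
proof (induction a)
  case 0 then show ?case by simp
next
  case (Suc a)
  have "Tg (Suc a) x ^ 2 + (1 - x^2) * Sg (Suc a) x ^ 2 = Tg a x ^ 2 + (1 - x^2) * Sg a x ^ 2"
    unfolding T_step S_step by (simp add: algebra_simps power2_eq_square)
  then show ?case using Suc by simp
qed

lemma TS_add: "Tg (a + b) x = Tg a x * Tg b x - (1 - x^2) * Sg a x * Sg b x \<and>
               Sg (a + b) x = Sg a x * Tg b x + Tg a x * Sg b x"
proof (induction b rule: nat_induct2)
  case 1 then show ?case by simp
next
  case 2 then show ?case using T_step[of a x] S_step[of a x] by (simp add: algebra_simps)
next
  case (3 n)
  have e: "a + Suc (Suc n) = Suc (Suc (a + n))" by simp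
  from 3 have e1: "Tg (a + n) x = Tg a x * Tg n x - (1 - x\<^sup>2) * Sg a x * Sg n x"
     "Sg (a + n) x = Sg a x * Tg n x + Tg a x * Sg n x"
     "Tg (Suc (a + n)) x = Tg a x * Tg (Suc n) x - (1 - x\<^sup>2) * Sg a x * Sg (Suc n) x"
     "Sg (Suc (a + n)) x = Sg a x * Tg (Suc n) x + Tg a x * Sg (Suc n) x" by auto
  show ?case unfolding e Tg.simps(3)[of "a+n"] Sg.simps(3)[of "a+n"] e1
    Tg.simps(3)[of n] Sg.simps(3)[of n]
    by (simp add: algebra_simps)
qed

lemma S_double: "Sg (2 * j) x = 2 * Sg j x * Tg j x"
proof -
  have e: "2 * j = j + j" by simp
  show ?thesis unfolding e using TS_add[of j j x] by (simp add: algebra_simps)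
qed

lemma T_double: "Tg (2 * j) x = 2 * Tg j x ^ 2 - 1"
proof -
  have e: "2 * j = j + j" by simp
  have "Tg (2*j) x = Tg j x ^ 2 - (1 - x^2) * Sg j x ^ 2"
    unfolding e using TS_add[of j j x] by (simp add: power2_eq_square algebra_simps)
  also have "\<dots> = 2 * Tg j x ^ 2 - 1" using pell[of j x] by (simp add: algebra_simps)
  finally show ?thesis .
qed

lemma T_S_cross: "Tg (Suc a) x * Tg a x + (1 - x^2) * Sg (Suc a) x * Sg a x = x"
proof -
  have "Tg (Suc a) x * Tg a x + (1 - x^2) * Sg (Suc a) x * Sg a x
        = x * (Tg a x ^ 2 + (1 - x^2) * Sg a x ^ 2)"
    unfolding T_step[of a] S_step[of a] by (simp add: algebra_simps power2_eq_square)
  then show ?thesis using pell[of a x] by simp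
qed

lemma T_odd_minus: "Tg (2 * a + 1) x - x = 2 * (x^2 - 1) * Sg (Suc a) x * Sg a x"
proof -
  define TT where "TT = Tg (Suc a) x * Tg a x"
  define Q where "Q = (1 - x^2) * Sg (Suc a) x * Sg a x"
  have e: "2*a+1 = Suc a + a" by simp
  have h1: "Tg (2*a+1) x = TT - Q"
    unfolding e TT_def Q_def using TS_add[of "Suc a" a x] by blast
  have h2: "TT + Q = x" unfolding TT_def Q_def using T_S_cross[of a x] by (simp add: algebra_simps)
  have "Tg (2*a+1) x - x = (TT - Q) - x" using h1 by simp
  also have "\<dots> = (TT - Q) - (TT + Q)" by (simp only: h2)
  also have "\<dots> = 2 * (x^2 - 1) * Sg (Suc a) x * Sg a x" unfolding Q_def by (simp add: algebra_simps)
  finally show ?thesis .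
qed



definition tt :: "nat \<Rightarrow> 'a::comm_ring_1 \<Rightarrow> nat \<Rightarrow> 'a" where
  "tt m y k = (-1)^k * of_nat ((m-k) choose k) * y^(m-2*k)"

definition Qs :: "nat \<Rightarrow> 'a::comm_ring_1 \<Rightarrow> 'a" where
  "Qs m y = (\<Sum>k\<le>m. tt m y k)"

lemma tt_zero: "m < k \<Longrightarrow> tt m y k = 0"
  unfolding tt_def by (simp add: binomial_eq_0)

lemma tt_zero2: "m < 2 * k \<Longrightarrow> tt m y k = 0"
  unfolding tt_def by (simp add: binomial_eq_0)

lemma Qs_ext: "m \<le> N \<Longrightarrow> Qs m y = (\<Sum>k\<le>N. tt m y k)"
  unfolding Qs_def by (rule sum.mono_neutral_left) (auto simp: tt_zero)

lemma tt_rec: "tt (Suc (Suc n)) y (Suc k) = y * tt (Suc n) y (Suc k) - tt n y k"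
proof (cases "2*k+1 \<le> n")
  case True
  then have e1: "Suc (Suc n) - Suc k = Suc (n - k)" and e2: "Suc n - Suc k = n - k"
    and e3: "Suc (Suc n) - 2 * Suc k = n - 2*k" and e4: "y^(n - 2*k) = y * y^(Suc n - 2 * Suc k)"
    using True by (auto simp flip: power_Suc simp: Suc_diff_le Suc_diff_Suc[symmetric])
  show ?thesis unfolding tt_def e1 e2 e3 binomial_Suc_Suc e4
    by (simp add: algebra_simps)
next
  case False
  show ?thesis
  proof (cases "2*k = n")
    case True
    then have e1: "Suc (Suc n) - Suc k = Suc k" and e2: "Suc n - Suc k = k" and e5: "n - k = k"
      and e3: "Suc (Suc n) - 2 * Suc k = 0" and e6: "n - 2 * k = 0" by auto
    show ?thesis unfolding tt_def e1 e2 e3 e5 e6 by (simp add: binomial_eq_0)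
  next
    case False
    with \<open>\<not> 2*k+1 \<le> n\<close> have "n < 2*k" by auto
    then have z: "Suc (Suc n) - Suc k choose Suc k = 0" "Suc n - Suc k choose Suc k = 0" "n - k choose k = 0"
      by (auto simp: binomial_eq_0)
    show ?thesis unfolding tt_def z by simp
  qed
qed

lemma Pr_closed: "Pr m y = Qs m y"
proof (induction m rule: nat_induct2)
  case 1 then show ?case by (simp add: Qs_def tt_def)
next
  case 2 then show ?case by (simp add: Qs_def tt_def)
next
  case (3 n)
  have a: "Qs (Suc (Suc n)) y = tt (Suc (Suc n)) y 0 + (\<Sum>k\<le>Suc n. tt (Suc (Suc n)) y (Suc k))"
    unfolding Qs_def by (rule sum.atMost_Suc_shift)
  have b: "Qs (Suc n) y = tt (Suc n) y 0 + (\<Sum>k\<le>Suc n. tt (Suc n) y (Suc k))"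
    by (simp add: Qs_ext[of "Suc n" "Suc (Suc n)"] sum.atMost_Suc_shift del: sum.atMost_Suc)
  have c: "Qs n y = (\<Sum>k\<le>Suc n. tt n y k)" by (rule Qs_ext) simp
  have d: "tt (Suc (Suc n)) y 0 = y * tt (Suc n) y 0" by (simp add: tt_def)
  have "Qs (Suc (Suc n)) y = y * Qs (Suc n) y - Qs n y"
    unfolding a b c d tt_rec by (simp add: sum_distrib_left sum_subtractf algebra_simps)
  then show ?case using 3 by simp
qed


lemma coef_split:
  assumes "2 * k \<le> m" "2 \<le> m"
  shows "real m / real (m - k) * real ((m - k) choose k)
         = real ((m - k) choose k) + (if k = 0 then 0 else real ((m - k - 1) choose (k - 1)))"
proof (cases "k = 0")
  case True then show ?thesis using assms by simp
next
  case False
  have pos: "real (m - k) \<noteq> 0" using assms False by auto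
  have "k * ((m - k) choose k) = (m - k) * ((m - k - 1) choose (k - 1))"
    using times_binomial_minus1_eq[of k "m-k"] False by simp
  then have h: "real k * real ((m - k) choose k) = real (m - k) * real ((m - k - 1) choose (k - 1))"
    by (metis of_nat_mult)
  have m: "real m = real (m - k) + real k" using assms by simp
  have e: "real m * real ((m - k) choose k) = real (m - k) * (real ((m - k) choose k) + real ((m - k - 1) choose (k - 1)))"
    unfolding m distrib_right h by (simp add: distrib_left)
  have "real m / real (m - k) * real ((m - k) choose k) = (real m * real ((m - k) choose k)) / real (m - k)"
    by simp
  also have "\<dots> = real ((m - k) choose k) + real ((m - k - 1) choose (k - 1))"
    unfolding e using pos by simp
  finally show ?thesis using False by simp
qed

lemma powr_term:
  assumes "2 * k \<le> m"
  shows "(2::real) powr (real m - 2 * real k - 1) * x ^ (m - 2 * k) = (2 * x) ^ (m - 2 * k) / 2"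
proof -
  have e: "real m - 2 * real k - 1 = real (m - 2 * k) - 1" using assms by (simp add: of_nat_diff)
  have "(2::real) powr (real (m - 2 * k) - 1) = 2 powr real (m - 2 * k) / 2 powr 1"
    by (rule powr_diff)
  also have "\<dots> = 2 ^ (m - 2 * k) / 2" by (simp add: powr_realpow)
  finally show ?thesis unfolding e by (simp add: power_mult_distrib)
qed

definition GG :: "nat \<Rightarrow> real \<Rightarrow> nat \<Rightarrow> real" where
  "GG m y k = (if k = 0 then 0 else (-1)^k * real ((m - k - 1) choose (k - 1)) * y ^ (m - 2 * k))"

lemma cheb_split:
  assumes "2 \<le> m"
  shows "cheb m x = ((\<Sum>k = 0..m div 2. tt m (2*x) k) + (\<Sum>k = 0..m div 2. GG m (2*x) k)) / 2"
proof -
  have "cheb m x = (\<Sum>k = 0..m div 2. (tt m (2*x) k + GG m (2*x) k) / 2)"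
    unfolding cheb_def
  proof (rule sum.cong[OF refl])
    fix k assume "k \<in> {0..m div 2}"
    then have k: "2 * k \<le> m" by auto
    have "(-1) ^ k * (real m / real (m - k)) * real ((m - k) choose k)
       * 2 powr (real m - 2 * real k - 1) * x ^ (m - 2 * k)
       = (-1) ^ k * (real m / real (m - k) * real ((m - k) choose k))
       * (2 powr (real m - 2 * real k - 1) * x ^ (m - 2 * k))" by (simp only: mult.assoc)
    also have "\<dots> = (-1) ^ k * (real ((m - k) choose k) + (if k = 0 then 0 else real ((m - k - 1) choose (k - 1))))
       * ((2 * x) ^ (m - 2 * k) / 2)" by (simp only: coef_split[OF k assms] powr_term[OF k])
    also have "\<dots> = (tt m (2*x) k + GG m (2*x) k) / 2"
      by (cases "k = 0") (simp_all add: tt_def GG_def algebra_simps)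
    finally show "(-1) ^ k * (real m / real (m - k)) * real ((m - k) choose k)
       * 2 powr (real m - 2 * real k - 1) * x ^ (m - 2 * k) = (tt m (2*x) k + GG m (2*x) k) / 2" .
  qed
  then show ?thesis by (simp only: sum.distrib sum_divide_distrib[symmetric])
qed

lemma cheb_Qs:
  assumes "2 \<le> m"
  shows "cheb m x = (Qs m (2*x) - Qs (m - 2) (2*x)) / 2"
proof -
  obtain n where n: "m = Suc (Suc n)" using assms by (metis add_2_eq_Suc le_Suc_ex)
  have A: "(\<Sum>k = 0..m div 2. tt m (2*x) k) = Qs m (2*x)"
    unfolding Qs_def atLeast0AtMost
  proof (rule sum.mono_neutral_left)
    show "\<forall>i\<in>{..m} - {..m div 2}. tt m (2 * x) i = 0"
    proof
      fix i assume "i \<in> {..m} - {..m div 2}"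
      then have "m < 2 * i" by auto
      then show "tt m (2 * x) i = 0" by (rule tt_zero2)
    qed
  qed auto
  have B1: "(\<Sum>k = 0..m div 2. GG m (2*x) k) = (\<Sum>k\<le>Suc n. GG m (2*x) k)"
    unfolding atLeast0AtMost
  proof (rule sum.mono_neutral_left)
    show "\<forall>i\<in>{..Suc n} - {..m div 2}. GG m (2 * x) i = 0"
    proof
      fix i assume "i \<in> {..Suc n} - {..m div 2}"
      then have "m < 2 * i" "2 \<le> i" using n by auto
      then have "m - i - 1 < i - 1" by auto
      then show "GG m (2 * x) i = 0" by (simp add: GG_def binomial_eq_0)
    qed
  qed (use n in auto)
  have B2: "(\<Sum>k\<le>Suc n. GG m (2*x) k) = GG m (2*x) 0 + (\<Sum>k\<le>n. GG m (2*x) (Suc k))"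
    by (rule sum.atMost_Suc_shift)
  have B3: "GG m (2*x) (Suc k) = - tt n (2*x) k" for k
    unfolding GG_def tt_def n by simp
  have B: "(\<Sum>k = 0..m div 2. GG m (2*x) k) = - Qs (m - 2) (2*x)"
    unfolding B1 B2 B3 by (simp add: GG_def Qs_def n sum_negf)
  show ?thesis unfolding cheb_split[OF assms] A B by simp
qed

lemma Tg_Pr: "2 * Tg (Suc (Suc n)) x = Pr (Suc (Suc n)) (2 * x) - Pr n (2 * x)"
proof (induction n rule: nat_induct2)
  case 1 then show ?case by (simp add: algebra_simps)
next
  case 2 then show ?case by (simp add: algebra_simps)
next
  case (3 n)
  have e: "2 * Tg (Suc (Suc (Suc (Suc n)))) x = 2 * x * (2 * Tg (Suc (Suc (Suc n))) x) - 2 * Tg (Suc (Suc n)) x"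
    by (simp only: Tg.simps(3)[of "Suc (Suc n)"]) (simp add: algebra_simps)
  have f: "Pr (Suc (Suc (Suc (Suc n)))) (2*x) = 2 * x * Pr (Suc (Suc (Suc n))) (2*x) - Pr (Suc (Suc n)) (2*x)"
    by (simp only: Pr.simps(3)[of "Suc (Suc n)"])
  have g: "Pr (Suc (Suc n)) (2*x) = 2 * x * Pr (Suc n) (2*x) - Pr n (2*x)"
    by (simp only: Pr.simps(3)[of n])
  show ?case unfolding e 3(1) 3(2) f using g by (simp add: algebra_simps)
qed

lemma cheb_Tg: "2 \<le> m \<Longrightarrow> cheb m x = Tg m x"
proof -
  assume m: "2 \<le> m"
  obtain n where n: "m = Suc (Suc n)" using m by (metis add_2_eq_Suc le_Suc_ex)
  have "cheb m x = (Pr m (2*x) - Pr n (2*x)) / 2" using cheb_Qs[OF m, of x] unfolding Pr_closed n by simp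
  also have "\<dots> = Tg m x" unfolding n Tg_Pr[of n x, symmetric] by simp
  finally show ?thesis .
qed

lemma Tg_of_int: "Tg m (of_int a :: 'a::comm_ring_1) = of_int (Tg m a)"
proof (induction m rule: nat_induct2)
  case (3 n)
  show ?case by (simp only: Tg.simps(3) 3 of_int_diff of_int_mult of_int_numeral)
qed simp_all

lemma cheb_int_Tg: "2 \<le> m \<Longrightarrow> cheb_int m a = Tg m a"
  unfolding cheb_int_def using cheb_Tg[of m "real_of_int a"] Tg_of_int[of m a, where 'a=real] by simp


section \<open>Number theory of Chebyshev polynomials over the integers\<close>

definition dprop :: "(int \<Rightarrow> int) \<Rightarrow> bool" where
  "dprop f \<longleftrightarrow> (\<forall>y h. h dvd f (y + h) - f y)"

lemma dprop_mult: "dprop f \<Longrightarrow> dprop g \<Longrightarrow> dprop (\<lambda>y. f y * g y)"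
  unfolding dprop_def
proof (intro allI)
  fix y h assume f: "\<forall>y h. h dvd f (y + h) - f y" and g: "\<forall>y h. h dvd g (y + h) - g y"
  have "f (y + h) * g (y + h) - f y * g y = f (y + h) * (g (y + h) - g y) + g y * (f (y + h) - f y)"
    by (simp add: algebra_simps)
  then show "h dvd f (y + h) * g (y + h) - f y * g y" using f g by simp
qed

lemma dprop_T: "dprop (Tg k :: int \<Rightarrow> int)"
  unfolding dprop_def
proof (induction k rule: nat_induct2)
  case (3 n)
  show ?case
  proof (intro allI)
    fix y h :: int
    have "Tg (Suc (Suc n)) (y + h) - Tg (Suc (Suc n)) y
      = 2 * y * (Tg (Suc n) (y + h) - Tg (Suc n) y) + h * (2 * Tg (Suc n) (y + h)) - (Tg n (y + h) - Tg n y)"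
      by (simp add: algebra_simps)
    then show "h dvd Tg (Suc (Suc n)) (y + h) - Tg (Suc (Suc n)) y"
      using 3 by (metis dvd_diff dvd_add dvd_mult dvd_triv_left)
  qed
qed auto

lemma dprop_S: "dprop (Sg k :: int \<Rightarrow> int)"
  unfolding dprop_def
proof (induction k rule: nat_induct2)
  case (3 n)
  show ?case
  proof (intro allI)
    fix y h :: int
    have "Sg (Suc (Suc n)) (y + h) - Sg (Suc (Suc n)) y
      = 2 * y * (Sg (Suc n) (y + h) - Sg (Suc n) y) + h * (2 * Sg (Suc n) (y + h)) - (Sg n (y + h) - Sg n y)"
      by (simp add: algebra_simps)
    then show "h dvd Sg (Suc (Suc n)) (y + h) - Sg (Suc (Suc n)) y"
      using 3 by (metis dvd_diff dvd_add dvd_mult dvd_triv_left)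
  qed
qed auto

lemma T_dvd_diff: "(x - y) dvd Tg k x - Tg k (y::int)"
  using dprop_T[of k] unfolding dprop_def by (metis add.commute diff_add_cancel)

lemma T_cong: "M dvd x - y \<Longrightarrow> M dvd Tg k x - Tg k (y::int)"
  using T_dvd_diff dvd_trans by blast

lemma T_mod: "Tg k (x mod M) mod M = Tg k (x::int) mod M"
proof -
  have "M dvd Tg k (x mod M) - Tg k x" by (rule T_cong) (simp add: mod_eq_dvd_iff[symmetric])
  then show ?thesis by (simp add: mod_eq_dvd_iff)
qed

lemma T_one: "Tg k (1::int) = 1"
  by (induction k rule: nat_induct2) auto

lemma T_minus_one: "Tg k (-1::int) = (-1) ^ k"
  by (induction k rule: nat_induct2) auto

lemma T_odd_arg: "odd x \<Longrightarrow> odd (Tg k (x::int))"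
  by (induction k rule: nat_induct2) auto

lemma S_parity: "odd (Sg k (x::int)) \<longleftrightarrow> odd k"
  by (induction k rule: nat_induct2) auto

lemma T_even_arg: "even (x::int) \<Longrightarrow> (even k \<longrightarrow> odd (Tg k x)) \<and> (odd k \<longrightarrow> (\<exists>w. odd w \<and> Tg k x = x * w))"
proof (induction k rule: nat_induct2)
  case 1 then show ?case by simp
next
  case 2 then show ?case by (intro conjI impI exI[of _ 1]) auto
next
  case (3 n)
  show ?case
  proof (intro conjI impI)
    assume "even (Suc (Suc n))"
    then have "odd (Tg n x)" using 3 by auto
    then show "odd (Tg (Suc (Suc n)) x)" by simp
  next
    assume "odd (Suc (Suc n))"
    then obtain w where w: "odd w" "Tg n x = x * w" using 3 by auto
    show "\<exists>w. odd w \<and> Tg (Suc (Suc n)) x = x * w"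
      by (rule exI[of _ "2 * Tg (Suc n) x - w"]) (use w in \<open>auto simp: algebra_simps\<close>)
  qed
qed

lemma T_zero_odd: "odd k \<Longrightarrow> Tg k (0::int) = 0"
  using T_even_arg[of 0 k] by auto

definition ex2 :: "nat \<Rightarrow> int \<Rightarrow> bool" where
  "ex2 e z \<longleftrightarrow> (\<exists>u. odd u \<and> z = 2 ^ e * u)"

lemma ex2_mult: "ex2 a z \<Longrightarrow> ex2 b w \<Longrightarrow> ex2 (a + b) (z * w)"
proof -
  assume "ex2 a z" "ex2 b w"
  then obtain u v where "odd u" "z = 2 ^ a * u" "odd v" "w = 2 ^ b * v" unfolding ex2_def by auto
  then show ?thesis unfolding ex2_def by (intro exI[of _ "u * v"]) (simp add: power_add algebra_simps)
qed

lemma ex2_0: "ex2 0 z \<longleftrightarrow> odd z"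
  unfolding ex2_def by simp

lemma ex2_2: "ex2 1 2"
  unfolding ex2_def by (auto intro: exI[of _ 1])

lemma ex2_cong: "ex2 K D \<Longrightarrow> (2::int) ^ (K + 1) dvd D - 2 ^ K"
proof -
  assume "ex2 K D"
  then obtain u where u: "odd u" "D = 2 ^ K * u" unfolding ex2_def by auto
  then obtain v where v: "u = 2 * v + 1" by (metis oddE)
  have "D - 2 ^ K = 2 ^ (K + 1) * v" using u v by (simp add: algebra_simps)
  then show ?thesis by simp
qed

lemma S_val_odd: "odd (x::int) \<Longrightarrow> odd j \<Longrightarrow> ex2 e (Sg (2 ^ e * j) x)"
proof (induction e)
  case 0 then show ?case by (simp add: ex2_0 S_parity)
next
  case (Suc e)
  have e: "2 ^ Suc e * j = 2 * (2 ^ e * j)" by simp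
  have "ex2 (1 + e + 0) (2 * Sg (2 ^ e * j) x * Tg (2 ^ e * j) x)"
    by (intro ex2_mult ex2_2) (use Suc T_odd_arg in \<open>auto simp: ex2_0\<close>)
  then show ?case unfolding e S_double by simp
qed

lemma S_val_even:
  assumes x: "ex2 n (x::int)" and n: "1 \<le> n" and j: "odd j"
  shows "ex2 (if e = 0 then 0 else n + e) (Sg (2 ^ e * j) x)"
proof (induction e)
  case 0 then show ?case using j by (simp add: ex2_0 S_parity)
next
  case (Suc e)
  have xe: "even x" using x n unfolding ex2_def by auto
  have e: "2 ^ Suc e * j = 2 * (2 ^ e * j)" by simp
  show ?case
  proof (cases "e = 0")
    case True
    obtain w where w: "odd w" "Tg j x = x * w" using T_even_arg[OF xe, of j] j by auto
    have "ex2 (1 + 0 + (n + 0)) (2 * Sg j x * Tg j x)"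
      unfolding w(2) by (intro ex2_mult ex2_2 x) (use j w in \<open>auto simp: ex2_0 S_parity\<close>)
    then show ?thesis using True by (simp add: S_double)
  next
    case False
    have "odd (Tg (2 ^ e * j) x)" using T_even_arg[OF xe, of "2 ^ e * j"] False by auto
    then have "ex2 (1 + (n + e) + 0) (2 * Sg (2 ^ e * j) x * Tg (2 ^ e * j) x)"
      by (intro ex2_mult ex2_2) (use Suc False in \<open>auto simp: ex2_0\<close>)
    then show ?thesis unfolding e S_double using False by simp
  qed
qed


lemma ex2_eq: "ex2 e z \<Longrightarrow> e = e' \<Longrightarrow> ex2 e' z" by simp

lemma key_val:
  fixes x :: int
  assumes q: "odd q" and s: "2 \<le> s"
    and a: "(a = 2 ^ (s - 1) * q \<and> odd (Suc a)) \<or> (Suc a = 2 ^ (s - 1) * q \<and> odd a)"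
  shows key_val_even: "ex2 n x \<Longrightarrow> 1 \<le> n \<Longrightarrow> ex2 (n + s) (Tg (2 * a + 1) x - x)"
    and key_val_odd: "odd x \<Longrightarrow> ex2 (n + 1) (x^2 - 1) \<Longrightarrow> ex2 (n + s + 1) (Tg (2 * a + 1) x - x)"
proof -
  assume x: "ex2 n x" and n: "1 \<le> n"
  have xe: "even x" using x n unfolding ex2_def by auto
  have x2: "ex2 0 (x^2 - 1)" using xe by (simp add: ex2_0 power2_eq_square)
  have sne: "s - 1 \<noteq> 0" using s by simp
  from a show "ex2 (n + s) (Tg (2 * a + 1) x - x)"
  proof
    assume A: "a = 2 ^ (s - 1) * q \<and> odd (Suc a)"
    have S1: "ex2 0 (Sg (Suc a) x)" using A s by (simp add: ex2_0 S_parity)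
    have S0: "ex2 (n + (s - 1)) (Sg a x)" using S_val_even[OF x n q, of "s - 1"] A sne by simp
    have "ex2 (1 + 0 + 0 + (n + (s - 1))) (2 * (x^2 - 1) * Sg (Suc a) x * Sg a x)"
      by (intro ex2_mult ex2_2 x2 S1 S0)
    then show ?thesis unfolding T_odd_minus by (rule ex2_eq) (use s in simp)
  next
    assume A: "Suc a = 2 ^ (s - 1) * q \<and> odd a"
    have S0: "ex2 0 (Sg a x)" using A s by (simp add: ex2_0 S_parity)
    have S1: "ex2 (n + (s - 1)) (Sg (Suc a) x)" using S_val_even[OF x n q, of "s - 1"] A sne by simp
    have "ex2 (1 + 0 + (n + (s - 1)) + 0) (2 * (x^2 - 1) * Sg (Suc a) x * Sg a x)"
      by (intro ex2_mult ex2_2 x2 S1 S0)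
    then show ?thesis unfolding T_odd_minus by (rule ex2_eq) (use s in simp)
  qed
next
  assume xo: "odd x" and x2: "ex2 (n + 1) (x^2 - 1)"
  from a show "ex2 (n + s + 1) (Tg (2 * a + 1) x - x)"
  proof
    assume A: "a = 2 ^ (s - 1) * q \<and> odd (Suc a)"
    have S1: "ex2 0 (Sg (Suc a) x)" using A s by (simp add: ex2_0 S_parity)
    have S0: "ex2 (s - 1) (Sg a x)" using S_val_odd[OF xo q, of "s - 1"] A by simp
    have "ex2 (1 + (n + 1) + 0 + (s - 1)) (2 * (x^2 - 1) * Sg (Suc a) x * Sg a x)"
      by (intro ex2_mult ex2_2 x2 S1 S0)
    then show ?thesis unfolding T_odd_minus by (rule ex2_eq) (use s in simp)
  next
    assume A: "Suc a = 2 ^ (s - 1) * q \<and> odd a"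
    have S0: "ex2 0 (Sg a x)" using A s by (simp add: ex2_0 S_parity)
    have S1: "ex2 (s - 1) (Sg (Suc a) x)" using S_val_odd[OF xo q, of "s - 1"] A by simp
    have "ex2 (1 + (n + 1) + (s - 1) + 0) (2 * (x^2 - 1) * Sg (Suc a) x * Sg a x)"
      by (intro ex2_mult ex2_2 x2 S1 S0)
    then show ?thesis unfolding T_odd_minus by (rule ex2_eq) (use s in simp)
  qed
qed

lemma even_index_S:
  "even (Sg (2 * j) (y::int)) \<and> 2 * h dvd Sg (2 * j) (y + h) - Sg (2 * j) y"
proof
  show "even (Sg (2 * j) y)" unfolding S_double by simp
  have "dprop (\<lambda>y. Sg j y * Tg j y)" by (intro dprop_mult dprop_S dprop_T)
  then have "h dvd Sg j (y + h) * Tg j (y + h) - Sg j y * Tg j y" unfolding dprop_def by blast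
  then have "2 * h dvd 2 * (Sg j (y + h) * Tg j (y + h) - Sg j y * Tg j y)" by (rule mult_dvd_mono[OF dvd_refl])
  moreover have "Sg (2 * j) (y + h) - Sg (2 * j) y = 2 * (Sg j (y + h) * Tg j (y + h) - Sg j y * Tg j y)"
    unfolding S_double by (simp add: algebra_simps)
  ultimately show "2 * h dvd Sg (2 * j) (y + h) - Sg (2 * j) y" by simp
qed

lemma prod_diff_even:
  fixes f g :: "int \<Rightarrow> int"
  assumes fe: "\<And>y. even (f y)" and fd: "\<And>y h. 2 * h dvd f (y + h) - f y" and g: "dprop g"
  shows "2 * h dvd f (y + h) * g (y + h) - f y * g y"
proof -
  have e: "f (y + h) * g (y + h) - f y * g y = f (y + h) * (g (y + h) - g y) + g y * (f (y + h) - f y)"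
    by (simp add: algebra_simps)
  obtain r where r: "f (y + h) = 2 * r" using fe by (meson evenE)
  obtain k where k: "g (y + h) - g y = h * k" using g unfolding dprop_def by (meson dvdE)
  have "2 * h dvd f (y + h) * (g (y + h) - g y)" unfolding r k by (simp add: algebra_simps)
  moreover have "2 * h dvd g y * (f (y + h) - f y)" using fd by simp
  ultimately show ?thesis unfolding e by simp
qed

lemma P_diff: "2 * h dvd Sg (Suc a) (y + h) * Sg a (y + h) - Sg (Suc a) y * Sg a (y::int)"
proof (cases "even a")
  case True
  then obtain j where j: "a = 2 * j" by blast
  have "2 * h dvd Sg a (y + h) * Sg (Suc a) (y + h) - Sg a y * Sg (Suc a) y"
    by (rule prod_diff_even) (use even_index_S j dprop_S in auto)
  then show ?thesis by (simp add: algebra_simps)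
next
  case False
  then obtain j where j: "Suc a = 2 * j" by (metis even_Suc evenE)
  show ?thesis
    by (rule prod_diff_even) (use even_index_S j dprop_S in auto)
qed

lemma T_H3:
  assumes N: "1 \<le> N"
  shows "(2::int) ^ (N + 2) dvd Tg (2 * a + 1) (x + 2 ^ N * t) - (Tg (2 * a + 1) x + 2 ^ N * t)"
proof -
  obtain M where M: "N = Suc M" using N by (cases N) auto
  define u :: int where "u = 2 ^ M * t"
  have hu: "2 ^ N * t = 2 * u" unfolding u_def M by simp
  have N2: "(2::int) ^ (N + 2) * t = 8 * u" unfolding u_def M by simp
  define P where "P y = Sg (Suc a) y * Sg a y" for y :: int
  have T: "Tg (2 * a + 1) y = y + 2 * (y^2 - 1) * P y" for y
    using T_odd_minus[of a y] unfolding P_def by (simp add: algebra_simps)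
  obtain r where r: "P (x + 2 * u) - P x = 2 * (2 * u) * r"
    using P_diff[of "2 * u" a x] unfolding P_def by (meson dvdE)
  have "Tg (2 * a + 1) (x + 2 * u) - (Tg (2 * a + 1) x + 2 * u)
     = 2 * ((x + 2 * u)^2 - 1) * P (x + 2 * u) - 2 * (x^2 - 1) * P x" unfolding T by simp
  also have "\<dots> = 8 * u * (x + u) * P (x + 2 * u) + 2 * (x^2 - 1) * (P (x + 2 * u) - P x)"
    by (simp add: algebra_simps power2_eq_square)
  also have "\<dots> = 8 * u * ((x + u) * P (x + 2 * u) + (x^2 - 1) * r)"
    unfolding r by (simp add: algebra_simps)
  finally have e: "Tg (2 * a + 1) (x + 2 * u) - (Tg (2 * a + 1) x + 2 * u) = 8 * u * ((x + u) * P (x + 2 * u) + (x^2 - 1) * r)" .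
  have "(2::int) ^ (N + 2) dvd 8 * u" unfolding N2[symmetric] by simp
  then show ?thesis unfolding hu e by (rule dvd_mult2)
qed

lemma T_even_step: "(2::int) ^ g dvd y - 1 \<Longrightarrow> 2 ^ (g + 1) dvd Tg (2 * k) y - 1"
proof -
  assume g: "(2::int) ^ g dvd y - 1"
  have "2 ^ g dvd Tg k y - Tg k 1" using T_cong[OF g] .
  then have d: "2 ^ g dvd Tg k y - 1" by (simp add: T_one)
  have e: "Tg (2 * k) y - 1 = 2 * ((Tg k y - 1) * (Tg k y + 1))"
    unfolding T_double by (simp add: algebra_simps power2_eq_square)
  have "2 ^ g dvd (Tg k y - 1) * (Tg k y + 1)" using d by simp
  then have "2 * 2 ^ g dvd 2 * ((Tg k y - 1) * (Tg k y + 1))" by (rule mult_dvd_mono[OF dvd_refl])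
  then show ?thesis unfolding e by simp
qed


lemma s_props:
  assumes mo: "odd m" and m2: "2 \<le> m"
  shows "2 \<le> s_of m \<and> (\<exists>a q. m = 2 * a + 1 \<and> odd q \<and>
           ((a = 2 ^ (s_of m - 1) * q \<and> odd (Suc a)) \<or> (Suc a = 2 ^ (s_of m - 1) * q \<and> odd a)))"
proof -
  define P where "P n \<longleftrightarrow> n \<ge> 2 \<and> (2 ^ n dvd m + 1 \<or> 2 ^ n dvd m - 1)" for n :: nat
  have sdef: "s_of m = (GREATEST n. P n)" unfolding s_of_def P_def by simp
  obtain a where a: "m = 2 * a + 1" using mo by (metis oddE)
  have a1: "1 \<le> a" using a m2 by simp
  have P2: "P 2"
  proof (cases "even a")
    case True
    then obtain b where "a = 2 * b" by blast
    then have "m - 1 = 4 * b" using a by simp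
    then show ?thesis unfolding P_def by simp
  next
    case False
    then obtain b where "a = 2 * b + 1" by (metis oddE)
    then have "m + 1 = 4 * (b + 1)" using a by simp
    then show ?thesis unfolding P_def by simp
  qed
  have bound: "P n \<Longrightarrow> n \<le> m" for n
  proof -
    assume "P n"
    then have "2 ^ n dvd m + 1 \<or> 2 ^ n dvd m - 1" unfolding P_def by simp
    moreover have "0 < m + 1" "0 < m - 1" using m2 by auto
    ultimately have "2 ^ n \<le> m + 1 \<or> 2 ^ n \<le> m - 1"
      using dvd_imp_le[of "2^n" "m+1"] dvd_imp_le[of "2^n" "m-1"] by argo
    then have "2 ^ n \<le> m + 1" by linarith
    moreover have "n < 2 ^ n" by (rule less_exp)
    ultimately have "n < m + 1" by linarith
    then show "n \<le> m" by simp
  qed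
  have Ps: "P (s_of m)" unfolding sdef by (rule GreatestI_nat[where P=P, OF P2]) (use bound in blast)
  have notP: "\<not> P (Suc (s_of m))"
  proof
    assume "P (Suc (s_of m))"
    then have "Suc (s_of m) \<le> s_of m" unfolding sdef by (rule Greatest_le_nat[where P=P]) (use bound in blast)
    then show False by simp
  qed
  define s where "s = s_of m"
  have s2: "2 \<le> s" using Ps unfolding P_def s_def by simp
  obtain r where r: "s = Suc (Suc r)" using s2 by (metis add_2_eq_Suc le_Suc_ex)
  have ex: "\<exists>q. odd q \<and> ((a = 2 ^ (s - 1) * q \<and> odd (Suc a)) \<or> (Suc a = 2 ^ (s - 1) * q \<and> odd a))"
  proof (cases "2 ^ s dvd m + 1")
    case True
    then obtain q where q: "m + 1 = 2 ^ s * q" by blast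
    have aq: "Suc a = 2 ^ (s - 1) * q" using q a r by simp
    have "odd q"
    proof
      assume "even q"
      then obtain q' where "q = 2 * q'" by blast
      then have "2 ^ Suc s dvd m + 1" using q by simp
      then show False using notP s2 unfolding P_def s_def by simp
    qed
    moreover have "even (Suc a)" using aq r by simp
    then have "odd a" by simp
    ultimately show ?thesis using aq by blast
  next
    case False
    then have "2 ^ s dvd m - 1" using Ps unfolding P_def s_def by simp
    then obtain q where q: "m - 1 = 2 ^ s * q" by blast
    have aq: "a = 2 ^ (s - 1) * q" using q a r by simp
    have "odd q"
    proof
      assume "even q"
      then obtain q' where "q = 2 * q'" by blast
      then have "2 ^ Suc s dvd m - 1" using q by simp
      then show False using notP s2 unfolding P_def s_def by simp
    qed
    moreover have "odd (Suc a)" using aq r by simp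
    ultimately show ?thesis using aq by blast
  qed
  show ?thesis using s2 ex a unfolding s_def by blast
qed


section \<open>A transitivity criterion\<close>

definition H3 :: "(int \<Rightarrow> int) \<Rightarrow> bool" where
  "H3 f \<longleftrightarrow> (\<forall>x N t. 1 \<le> N \<longrightarrow> (2::int) ^ (N + 2) dvd f (x + 2 ^ N * t) - (f x + 2 ^ N * t))"

lemma H3_D:
  assumes "H3 f" "1 \<le> N"
  obtains r where "f (x + 2 ^ N * t) = f x + 2 ^ N * (t + 4 * r)"
proof -
  obtain r where "f (x + 2 ^ N * t) - (f x + 2 ^ N * t) = 2 ^ (N + 2) * r"
    using assms unfolding H3_def by (meson dvdE)
  then have "f (x + 2 ^ N * t) = f x + 2 ^ N * (t + 4 * r)" by (simp add: power_add algebra_simps)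
  then show ?thesis by (rule that)
qed

lemma H3_comp: "H3 f \<Longrightarrow> H3 g \<Longrightarrow> H3 (g \<circ> f)"
  unfolding H3_def[of "g \<circ> f"]
proof (intro allI impI)
  fix x N t :: int
  fix N :: nat
  assume f: "H3 f" and g: "H3 g" and N: "1 \<le> N"
  obtain r where r: "f (x + 2 ^ N * t) = f x + 2 ^ N * (t + 4 * r)" using H3_D[OF f N] .
  obtain r' where r': "g (f x + 2 ^ N * (t + 4 * r)) = g (f x) + 2 ^ N * ((t + 4 * r) + 4 * r')"
    using H3_D[OF g N] .
  have "(g \<circ> f) (x + 2 ^ N * t) - ((g \<circ> f) x + 2 ^ N * t) = 2 ^ (N + 2) * (r + r')"
    using r r' by (simp add: power_add algebra_simps)
  then show "(2::int) ^ (N + 2) dvd (g \<circ> f) (x + 2 ^ N * t) - ((g \<circ> f) x + 2 ^ N * t)" by simp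
qed

lemma H3_pow: "H3 f \<Longrightarrow> H3 (f ^^ k)"
proof (induction k)
  case 0 then show ?case by (simp add: H3_def)
next
  case (Suc k)
  have "H3 (f \<circ> (f ^^ k))" by (rule H3_comp) (use Suc in auto)
  then show ?case by (simp add: o_def)
qed

lemma H3_double:
  assumes g: "H3 g" and L: "1 \<le> L" and h: "(2::int) ^ (L + 1) dvd g x - (x + 2 ^ L)"
  shows "(2::int) ^ (L + 2) dvd g (g x) - (x + 2 ^ (L + 1))"
proof -
  obtain r where r: "g x - (x + 2 ^ L) = 2 ^ (L + 1) * r" using h by (meson dvdE)
  have gx: "g x = x + 2 ^ L * (1 + 2 * r)" using r by (simp add: power_add algebra_simps)
  obtain r' where r': "g (x + 2 ^ L * (1 + 2 * r)) = g x + 2 ^ L * ((1 + 2 * r) + 4 * r')"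
    using H3_D[OF g L] .
  have "g (g x) - (x + 2 ^ (L + 1)) = 2 ^ (L + 2) * (r + r')"
    unfolding gx r' unfolding gx by (simp add: power_add algebra_simps)
  then show ?thesis by simp
qed

lemma trans_crit:
  fixes f :: "int \<Rightarrow> int"
  assumes H: "H3 f" and K: "1 \<le> K"
    and H2: "\<And>x. (2::int) ^ K dvd x - b \<Longrightarrow> 2 ^ (K + 1) dvd f x - (x + 2 ^ K)"
  shows trans_inv: "(2::int) ^ K dvd x - b \<Longrightarrow> 2 ^ K dvd (f ^^ k) x - b"
    and trans_all: "(2::int) ^ K dvd x - b \<Longrightarrow> 2 ^ K dvd y - b \<Longrightarrow> \<exists>k. 2 ^ N dvd (f ^^ k) x - y"
proof -
  have inv1: "2 ^ K dvd f z - b" if z: "(2::int) ^ K dvd z - b" for z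
  proof -
    have "(2::int) ^ K dvd 2 ^ (K + 1)" by (simp add: power_add)
    then have a: "(2::int) ^ K dvd f z - (z + 2 ^ K)" using H2[OF z] dvd_trans by blast
    have "f z - b = (f z - (z + 2 ^ K)) + 2 ^ K + (z - b)" by simp
    then show ?thesis using a z by (metis dvd_add dvd_refl)
  qed
  have invk: "2 ^ K dvd (f ^^ k) z - b" if z: "(2::int) ^ K dvd z - b" for z k
    by (induction k) (use z inv1 in auto)
  then show "(2::int) ^ K dvd x - b \<Longrightarrow> 2 ^ K dvd (f ^^ k) x - b" by blast
  have F: "(2::int) ^ (K + j + 1) dvd (f ^^ (2 ^ j)) z - (z + 2 ^ (K + j))" if z: "(2::int) ^ K dvd z - b" for j z
  proof (induction j)
    case 0 then show ?case using H2[OF z] by simp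
  next
    case (Suc j)
    have e: "f ^^ (2 ^ Suc j) = (f ^^ (2 ^ j)) \<circ> (f ^^ (2 ^ j))"
      by (simp add: funpow_add[symmetric] mult_2)
    have "(2::int) ^ (K + j + 2) dvd (f ^^ (2 ^ j)) ((f ^^ (2 ^ j)) z) - (z + 2 ^ (K + j + 1))"
      by (rule H3_double[OF H3_pow[OF H]]) (use K Suc in auto)
    then show ?case unfolding e by simp
  qed
  assume x: "(2::int) ^ K dvd x - b" and y: "(2::int) ^ K dvd y - b"
  show "\<exists>k. 2 ^ N dvd (f ^^ k) x - y"
  proof (induction N)
    case 0 then show ?case by simp
  next
    case (Suc N)
    show ?case
    proof (cases "Suc N \<le> K")
      case True
      have xy: "x - y = (x - b) - (y - b)" by simp
      have "(2::int) ^ K dvd x - y" unfolding xy using x y by (rule dvd_diff)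
      moreover have "(2::int) ^ Suc N dvd 2 ^ K" using True by (rule le_imp_power_dvd)
      ultimately show ?thesis by (intro exI[of _ 0]) (use dvd_trans in auto)
    next
      case False
      then have NK: "K \<le> N" by simp
      obtain k where k: "(2::int) ^ N dvd (f ^^ k) x - y" using Suc by blast
      define z where "z = (f ^^ k) x"
      obtain u where u: "z - y = 2 ^ N * u" using k unfolding z_def by (meson dvdE)
      show ?thesis
      proof (cases "even u")
        case True
        then obtain v where "u = 2 * v" by blast
        then have "(2::int) ^ Suc N dvd (f ^^ k) x - y" using u unfolding z_def by simp
        then show ?thesis by blast
      next
        case False
        then obtain v where v: "u = 2 * v + 1" by (metis oddE)
        have zb: "(2::int) ^ K dvd z - b" unfolding z_def using invk[OF x] .
        have "(2::int) ^ (K + (N - K) + 1) dvd (f ^^ (2 ^ (N - K))) z - (z + 2 ^ (K + (N - K)))"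
          by (rule F[OF zb])
        then have A: "(2::int) ^ Suc N dvd (f ^^ (2 ^ (N - K))) z - (z + 2 ^ N)" using NK by simp
        have B: "(f ^^ (2 ^ (N - K))) z - y = ((f ^^ (2 ^ (N - K))) z - (z + 2 ^ N)) + 2 ^ Suc N * (v + 1)"
          using u v by (simp add: algebra_simps)
        have "(2::int) ^ Suc N dvd (f ^^ (2 ^ (N - K))) z - y" unfolding B using A by simp
        then have "(2::int) ^ Suc N dvd (f ^^ (2 ^ (N - K) + k)) x - y"
          unfolding z_def by (simp add: funpow_add)
        then show ?thesis by blast
      qed
    qed
  qed
qed


section \<open>The 2-adic layer\<close>

lemma Z2_range: "x \<in> Z2 \<Longrightarrow> 0 \<le> x n \<and> x n < 2 ^ n"
  unfolding Z2_def by blast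

lemma Z2_modself: "x \<in> Z2 \<Longrightarrow> x n mod 2 ^ n = x n"
  using Z2_range[of x n] by simp

lemma mod_lin: "(c + d * (z mod M)) mod M = (c + d * z) mod (M::int)"
  by (metis mod_add_right_eq mod_mult_right_eq)

lemma Z2_mod: assumes "x \<in> Z2" "M \<le> n" shows "x n mod 2 ^ M = x M"
  using assms(2)
proof (induction n rule: dec_induct)
  case base then show ?case using assms(1) by (simp add: Z2_modself)
next
  case (step n)
  have "x (Suc n) mod 2 ^ M = (x (Suc n) mod 2 ^ n) mod 2 ^ M"
    using step(1) by (simp add: mod_mod_cancel le_imp_power_dvd)
  also have "\<dots> = x n mod 2 ^ M" using assms(1) unfolding Z2_def by simp
  finally show ?case using step by simp
qed

lemma z2_of_int_Z2: "z2_of_int c \<in> Z2"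
  unfolding Z2_def z2_of_int_def by (simp add: mod_mod_cancel le_imp_power_dvd)

lemma z2_of_int_0: "z2_of_int c 0 = 0"
  unfolding z2_of_int_def by simp

lemma Z2_0: "x \<in> Z2 \<Longrightarrow> x 0 = 0"
  using Z2_range[of x 0] by simp

lemma Tz_level: "2 \<le> m \<Longrightarrow> Tz m x n = Tg m (x n) mod 2 ^ n"
  unfolding Tz_def by (simp add: cheb_int_Tg)

lemma Tz_Z2: assumes m: "2 \<le> m" and x: "x \<in> Z2" shows "Tz m x \<in> Z2"
  unfolding Z2_def
proof (intro CollectI conjI allI)
  fix n
  show "0 \<le> Tz m x n" "Tz m x n < 2 ^ n" unfolding Tz_level[OF m] by auto
  have "Tz m x (Suc n) mod 2 ^ n = Tg m (x (Suc n)) mod 2 ^ n"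
    unfolding Tz_level[OF m] by (simp add: mod_mod_cancel le_imp_power_dvd)
  also have "\<dots> = Tg m (x (Suc n) mod 2 ^ n) mod 2 ^ n" by (simp add: T_mod)
  also have "\<dots> = Tz m x n" unfolding Tz_level[OF m] using x unfolding Z2_def by simp
  finally show "Tz m x (Suc n) mod 2 ^ n = Tz m x n" .
qed

lemma Tz_pow:
  assumes m: "2 \<le> m" and x: "x \<in> Z2"
  shows "(Tz m ^^ k) x \<in> Z2 \<and> ((Tz m ^^ k) x) n = (Tg m ^^ k) (x n) mod 2 ^ n"
proof (induction k)
  case 0 then show ?case using x by (simp add: Z2_modself)
next
  case (Suc k)
  have "((Tz m ^^ Suc k) x) n = Tg m (((Tz m ^^ k) x) n) mod 2 ^ n" by (simp add: Tz_level[OF m])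
  also have "\<dots> = Tg m ((Tg m ^^ k) (x n) mod 2 ^ n) mod 2 ^ n" using Suc by simp
  also have "\<dots> = (Tg m ^^ Suc k) (x n) mod 2 ^ n" by (simp add: T_mod)
  finally show ?case using Suc Tz_Z2[OF m] by simp
qed

lemma z2_agree_bound:
  assumes x: "x \<in> Z2" and y: "y \<in> Z2" and ne: "x \<noteq> y"
  obtains M where "\<And>n. x n = y n \<Longrightarrow> n \<le> M"
proof -
  obtain M where M: "x M \<noteq> y M" using ne by blast
  have "n \<le> M" if "x n = y n" for n
  proof (rule ccontr)
    assume "\<not> n \<le> M"
    then have "M \<le> n" by simp
    then have "x M = y M" using Z2_mod[OF x] Z2_mod[OF y] that by metis
    then show False using M by simp
  qed
  then show ?thesis by (rule that)
qed

lemma dist_le: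
  assumes x: "x \<in> Z2" and y: "y \<in> Z2" and N: "x N = y N"
  shows "z2_dist x y \<le> (1/2) ^ N"
proof (cases "x = y")
  case True then show ?thesis by (simp add: z2_dist_def)
next
  case False
  obtain M where M: "\<And>n. x n = y n \<Longrightarrow> n \<le> M" using z2_agree_bound[OF x y False] by blast
  have "N \<le> (GREATEST n. x n = y n)" by (rule Greatest_le_nat[where P="\<lambda>n. x n = y n", OF N]) (use M in blast)
  then have "(1/2::real) ^ (GREATEST n. x n = y n) \<le> (1/2) ^ N" by (rule power_decreasing) auto
  then show ?thesis using False by (simp add: z2_dist_def)
qed

lemma dist_exact:
  assumes x: "x \<in> Z2" and y: "y \<in> Z2" and ne: "x \<noteq> y"
  obtains g where "z2_dist x y = (1/2) ^ g" "x g = y g" "\<And>n. x n = y n \<Longrightarrow> n \<le> g"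
proof -
  obtain M where M: "\<And>n. x n = y n \<Longrightarrow> n \<le> M" using z2_agree_bound[OF x y ne] by blast
  have z: "x 0 = y 0" using Z2_0[OF x] Z2_0[OF y] by simp
  define g where "g = (GREATEST n. x n = y n)"
  have "x g = y g" unfolding g_def by (rule GreatestI_nat[where P="\<lambda>n. x n = y n", OF z]) (use M in blast)
  moreover have "n \<le> g" if "x n = y n" for n
    unfolding g_def by (rule Greatest_le_nat[where P="\<lambda>n. x n = y n", OF that]) (use M in blast)
  moreover have "z2_dist x y = (1/2) ^ g" using ne unfolding z2_dist_def g_def by simp
  ultimately show ?thesis using that by blast
qed

lemma z2_affine: "z2_add (z2_of_int c) (z2_mul (z2_of_int d) z) n = (c + d * z n) mod 2 ^ n"
  unfolding z2_add_def z2_mul_def z2_of_int_def by (simp add: mod_add_eq mod_mult_left_eq)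

lemma coset2_char: "coset2 c K = {x \<in> Z2. x K = c mod 2 ^ K}"
proof (intro equalityI subsetI)
  fix x assume "x \<in> coset2 c K"
  then obtain z where z: "z \<in> Z2" and xz: "x = z2_add (z2_of_int c) (z2_mul (z2_of_int (2 ^ K)) z)"
    unfolding coset2_def by blast
  have xn: "x n = (c + 2 ^ K * z n) mod 2 ^ n" for n unfolding xz z2_affine ..
  have "x \<in> Z2" unfolding Z2_def
  proof (intro CollectI conjI allI)
    fix n
    show "0 \<le> x n" "x n < 2 ^ n" unfolding xn by auto
    have "x (Suc n) mod 2 ^ n = (c + 2 ^ K * z (Suc n)) mod 2 ^ n"
      unfolding xn by (simp add: mod_mod_cancel le_imp_power_dvd)
    also have "\<dots> = (c + 2 ^ K * (z (Suc n) mod 2 ^ n)) mod 2 ^ n"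
      by (rule mod_lin[symmetric])
    also have "\<dots> = x n" unfolding xn using z unfolding Z2_def by simp
    finally show "x (Suc n) mod 2 ^ n = x n" .
  qed
  moreover have "x K = c mod 2 ^ K" unfolding xn by simp
  ultimately show "x \<in> {x \<in> Z2. x K = c mod 2 ^ K}" by blast
next
  fix x assume "x \<in> {x \<in> Z2. x K = c mod 2 ^ K}"
  then have x: "x \<in> Z2" and xK: "x K = c mod 2 ^ K" by auto
  define w where "w n = (x (n + K) - c) div 2 ^ K" for n
  have wd: "x (n + K) - c = 2 ^ K * w n" for n
  proof -
    have "x (n + K) mod 2 ^ K = c mod 2 ^ K" using Z2_mod[OF x, of K "n + K"] xK by simp
    then have "2 ^ K dvd x (n + K) - c" by (simp add: mod_eq_dvd_iff)
    then show ?thesis unfolding w_def by simp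
  qed
  define z where "z n = w n mod 2 ^ n" for n
  have zZ: "z \<in> Z2" unfolding Z2_def
  proof (intro CollectI conjI allI)
    fix n
    show "0 \<le> z n" "z n < 2 ^ n" unfolding z_def by auto
    have "x (Suc n + K) mod 2 ^ (n + K) = x (n + K)" by (rule Z2_mod[OF x]) simp
    then have "2 ^ (n + K) dvd x (Suc n + K) - x (n + K)" by (metis mod_eq_dvd_iff mod_mod_trivial)
    moreover have "x (Suc n + K) - x (n + K) = 2 ^ K * (w (Suc n) - w n)"
      using wd[of "Suc n"] wd[of n] by (simp add: algebra_simps)
    ultimately have "2 ^ K * 2 ^ n dvd 2 ^ K * (w (Suc n) - w n)" by (simp add: power_add mult.commute)
    then have "2 ^ n dvd w (Suc n) - w n" using dvd_mult_cancel_left[of "(2::int) ^ K"] by simp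
    then have "w (Suc n) mod 2 ^ n = w n mod 2 ^ n" by (simp add: mod_eq_dvd_iff)
    then show "z (Suc n) mod 2 ^ n = z n" unfolding z_def by (simp add: mod_mod_cancel le_imp_power_dvd)
  qed
  have "x = z2_add (z2_of_int c) (z2_mul (z2_of_int (2 ^ K)) z)"
  proof
    fix n
    have e1: "(c + 2 ^ K * z n) mod 2 ^ n = (c + 2 ^ K * w n) mod 2 ^ n"
      unfolding z_def by (rule mod_lin)
    have e2: "c + 2 ^ K * w n = x (n + K)" using wd[of n] by simp
    have e3: "x (n + K) mod 2 ^ n = x n" by (rule Z2_mod[OF x]) simp
    show "x n = z2_add (z2_of_int c) (z2_mul (z2_of_int (2 ^ K)) z) n"
      unfolding z2_affine e1 e2 e3 ..
  qed
  then show "x \<in> coset2 c K" unfolding coset2_def using zZ by blast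
qed


lemma small_pow:
  assumes "(e::real) > 0" obtains N where "(1/2::real) ^ N < e" "K \<le> N"
proof -
  obtain N0 where N0: "(1/2::real) ^ N0 < e" using real_arch_pow_inv[OF assms, of "1/2"] by auto
  have le: "(1/2::real) ^ max N0 K \<le> (1/2) ^ N0" by (rule power_decreasing) auto
  have "(1/2::real) ^ max N0 K < e" using le N0 by linarith
  then show ?thesis using that[of "max N0 K"] by simp
qed

lemma piece_good:
  assumes m: "2 \<le> m" and H: "H3 (Tg m)" and K: "1 \<le> K"
    and H2: "\<And>x. (2::int) ^ K dvd x - b \<Longrightarrow> 2 ^ (K + 1) dvd Tg m x - (x + 2 ^ K)"
  shows piece_inv: "Tz m ` coset2 b K \<subseteq> coset2 b K"
    and piece_min: "minimal_on (Tz m) (coset2 b K)"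
proof -
  have memD: "x \<in> Z2 \<and> 2 ^ K dvd x N - b" if "x \<in> coset2 b K" "K \<le> N" for x N
  proof -
    have x: "x \<in> Z2" "x K = b mod 2 ^ K" using that unfolding coset2_char by auto
    have "x N mod 2 ^ K = b mod 2 ^ K" using Z2_mod[OF x(1) that(2)] x(2) by simp
    then show ?thesis using x by (simp add: mod_eq_dvd_iff)
  qed
  show "Tz m ` coset2 b K \<subseteq> coset2 b K"
  proof
    fix y assume "y \<in> Tz m ` coset2 b K"
    then obtain x where x: "x \<in> coset2 b K" and y: "y = Tz m x" by blast
    have xd: "x \<in> Z2" "2 ^ K dvd x K - b" using memD[OF x] by auto
    have "2 ^ K dvd (Tg m ^^ 1) (x K) - b" by (rule trans_inv[OF H K H2 xd(2)])
    then have "Tg m (x K) mod 2 ^ K = b mod 2 ^ K" by (simp add: mod_eq_dvd_iff)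
    then have "y K = b mod 2 ^ K" unfolding y Tz_level[OF m] by simp
    then show "y \<in> coset2 b K" unfolding coset2_char y using Tz_Z2[OF m xd(1)] y by simp
  qed
  show "minimal_on (Tz m) (coset2 b K)"
    unfolding minimal_on_def
  proof (intro ballI allI impI)
    fix x y and e :: real
    assume x: "x \<in> coset2 b K" and y: "y \<in> coset2 b K" and e: "0 < e"
    obtain N where N: "(1/2::real) ^ N < e" "K \<le> N" using small_pow[OF e] by blast
    have xd: "x \<in> Z2" "2 ^ K dvd x N - b" using memD[OF x N(2)] by auto
    have yd: "y \<in> Z2" "2 ^ K dvd y N - b" using memD[OF y N(2)] by auto
    obtain k where k: "2 ^ N dvd (Tg m ^^ k) (x N) - y N" using trans_all[OF H K H2 xd(2) yd(2)] by blast
    have "((Tz m ^^ k) x) N = (Tg m ^^ k) (x N) mod 2 ^ N" using Tz_pow[OF m xd(1)] by simp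
    also have "\<dots> = y N mod 2 ^ N" using k by (simp add: mod_eq_dvd_iff)
    also have "\<dots> = y N" using Z2_modself[OF yd(1)] .
    finally have "z2_dist ((Tz m ^^ k) x) y \<le> (1/2) ^ N"
      by (intro dist_le) (use Tz_pow[OF m xd(1)] yd in auto)
    then show "\<exists>k. z2_dist ((Tz m ^^ k) x) y < e" using N by (intro exI[of _ k]) simp
  qed
qed


section \<open>The pieces\<close>

definition eps :: "nat \<Rightarrow> int" where
  "eps j = (if j = 1 then 0 else if j = 2 then 1 else -1)"

definition baseE :: "nat \<times> nat \<times> nat \<Rightarrow> int" where
  "baseE J = (case J of (j, n, i) \<Rightarrow> eps j + 2 ^ n * (1 + 2 * int i))"

definition KE :: "nat \<Rightarrow> nat \<times> nat \<times> nat \<Rightarrow> nat" where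
  "KE s J = (case J of (j, n, i) \<Rightarrow> if j = 1 then n + s else n + s + 1)"

lemma Epiece_eq: "Epiece s J = coset2 (baseE J) (KE s J)"
  by (cases J) (auto simp: Epiece_def baseE_def KE_def eps_def)

lemma Eidx_D: "J \<in> Eidx s \<Longrightarrow> \<exists>j n i. J = (j, n, i) \<and> 1 \<le> n \<and>
    ((j = 1 \<and> i < 2 ^ (s - 1)) \<or> ((j = 2 \<or> j = 3) \<and> 2 \<le> n \<and> i < 2 ^ s))"
  unfolding Eidx_def by auto

lemma odd_repr_sq:
  fixes v :: int
  assumes n: "2 \<le> n" and v: "odd v" and e: "e = 1 \<or> e = -1"
  shows "ex2 (n + 1) ((e + 2 ^ n * v)^2 - 1)"
proof -
  obtain n' where n': "n = Suc n'" "1 \<le> n'" using n by (cases n) auto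
  have ev: "even ((2::int) ^ n' * v)" using n'(2) by (cases n') auto
  from e show ?thesis
  proof
    assume e1: "e = 1"
    have "(e + 2 ^ n * v)^2 - 1 = 2 ^ (n + 1) * (v * (1 + 2 ^ n' * v))"
      unfolding e1 n' by (simp add: power2_eq_square algebra_simps)
    then show ?thesis unfolding ex2_def using v ev by (intro exI[of _ "v * (1 + 2 ^ n' * v)"]) auto
  next
    assume e1: "e = -1"
    have "(e + 2 ^ n * v)^2 - 1 = 2 ^ (n + 1) * (v * (2 ^ n' * v - 1))"
      unfolding e1 n' by (simp add: power2_eq_square algebra_simps)
    then show ?thesis unfolding ex2_def using v ev by (intro exI[of _ "v * (2 ^ n' * v - 1)"]) auto
  qed
qed

lemma piece_H2:
  assumes mo: "odd m" and m2: "2 \<le> m" and J: "J \<in> Eidx (s_of m)"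
    and x: "(2::int) ^ KE (s_of m) J dvd x - baseE J"
  shows "(2::int) ^ (KE (s_of m) J + 1) dvd Tg m x - (x + 2 ^ KE (s_of m) J)"
proof -
  define s where "s = s_of m"
  obtain a q where s2: "2 \<le> s" and a: "m = 2 * a + 1" and q: "odd q"
    and aq: "(a = 2 ^ (s - 1) * q \<and> odd (Suc a)) \<or> (Suc a = 2 ^ (s - 1) * q \<and> odd a)"
    using s_props[OF mo m2] unfolding s_def by blast
  obtain j n i where Jd: "J = (j, n, i)" "1 \<le> n"
    and ji: "(j = 1 \<and> i < 2 ^ (s - 1)) \<or> ((j = 2 \<or> j = 3) \<and> 2 \<le> n \<and> i < 2 ^ s)"
    using Eidx_D[OF J] unfolding s_def by blast
  define K where "K = KE s J"
  obtain t where t: "x - baseE J = 2 ^ K * t" using x unfolding K_def s_def by (meson dvdE)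
  have goal: "ex2 K (Tg m x - x) \<Longrightarrow> ?thesis"
    using ex2_cong[of K "Tg m x - x"] unfolding K_def s_def by (simp add: algebra_simps)
  from ji show ?thesis
  proof
    assume j1: "j = 1 \<and> i < 2 ^ (s - 1)"
    have K: "K = n + s" unfolding K_def KE_def Jd using j1 by simp
    have xv: "x = 2 ^ n * (1 + 2 * int i + 2 ^ s * t)"
      using t unfolding K Jd baseE_def eps_def using j1 by (simp add: power_add algebra_simps)
    have "odd (1 + 2 * int i + 2 ^ s * t)" using s2 by (cases s) auto
    then have "ex2 n x" unfolding ex2_def xv by blast
    then have "ex2 (n + s) (Tg (2 * a + 1) x - x)" by (rule key_val_even[OF q s2 aq _ Jd(2)])
    then show ?thesis using goal K a by simp
  next
    assume j2: "(j = 2 \<or> j = 3) \<and> 2 \<le> n \<and> i < 2 ^ s"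
    have K: "K = n + s + 1" unfolding K_def KE_def Jd using j2 by auto
    define v where "v = 1 + 2 * int i + 2 ^ (s + 1) * t"
    have vo: "odd v" unfolding v_def by simp
    have xv: "x = eps j + 2 ^ n * v"
      using t unfolding K Jd baseE_def v_def by (simp add: power_add algebra_simps)
    have e: "eps j = 1 \<or> eps j = -1" using j2 unfolding eps_def by auto
    have x2: "ex2 (n + 1) (x^2 - 1)" unfolding xv by (rule odd_repr_sq[OF _ vo e]) (use j2 in simp)
    have xo: "odd x" unfolding xv using e Jd(2) by (cases n) auto
    have "ex2 (n + s + 1) (Tg (2 * a + 1) x - x)" by (rule key_val_odd[OF q s2 aq xo x2])
    then show ?thesis using goal K a by simp
  qed
qed


lemma first_diff:
  assumes x: "x \<in> Z2" and ne: "x \<noteq> z2_of_int c"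
  obtains n where "x n = c mod 2 ^ n" "x (Suc n) \<noteq> c mod 2 ^ Suc n"
proof -
  have ex: "\<exists>N. x N \<noteq> c mod 2 ^ N" using ne unfolding z2_of_int_def by auto
  define N where "N = (LEAST N. x N \<noteq> c mod 2 ^ N)"
  have N1: "x N \<noteq> c mod 2 ^ N" unfolding N_def by (rule LeastI_ex[OF ex])
  have N2: "x k = c mod 2 ^ k" if "k < N" for k using not_less_Least[of k] that unfolding N_def by blast
  have "N \<noteq> 0"
  proof
    assume "N = 0" then show False using N1 Z2_0[OF x] by simp
  qed
  then obtain n where n: "N = Suc n" by (cases N) auto
  show ?thesis by (rule that[of n]) (use N1 N2 n in auto)
qed

lemma repr_at:
  assumes x: "x \<in> Z2" and n1: "x n = c mod 2 ^ n" and n2: "x (Suc n) \<noteq> c mod 2 ^ Suc n" and K: "n < K"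
  shows "\<exists>i::nat. i < 2 ^ (K - n - 1) \<and> x K = (c + 2 ^ n * (1 + 2 * int i)) mod 2 ^ K"
proof -
  have "x K mod 2 ^ n = c mod 2 ^ n" using Z2_mod[OF x, of n K] K n1 by simp
  then have "2 ^ n dvd x K - c" by (simp add: mod_eq_dvd_iff)
  then obtain u where u: "x K - c = 2 ^ n * u" by (meson dvdE)
  have "x K mod 2 ^ Suc n = x (Suc n)" using Z2_mod[OF x, of "Suc n" K] K by simp
  then have nd: "\<not> 2 ^ Suc n dvd x K - c" using n2 by (metis mod_eq_dvd_iff)
  have uo: "odd u"
  proof
    assume "even u"
    then obtain u' where "u = 2 * u'" by blast
    then have "x K - c = 2 ^ Suc n * u'" using u by simp
    then show False using nd by simp
  qed
  obtain r where r: "K - n = Suc r" using K by (cases "K - n") auto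
  define w where "w = u mod 2 ^ (K - n)"
  have w0: "0 \<le> w" "w < 2 ^ (K - n)" unfolding w_def by auto
  have wo: "odd w" unfolding w_def r using uo by (simp add: odd_iff_mod_2_eq_one mod_mod_cancel)
  then obtain i' where i': "w = 2 * i' + 1" by (metis oddE)
  have i'0: "0 \<le> i'" using w0 i' by simp
  define i where "i = nat i'"
  have wi: "w = 1 + 2 * int i" unfolding i_def using i' i'0 by simp
  have ib: "i < 2 ^ (K - n - 1)"
  proof -
    have "1 + 2 * int i < 2 * 2 ^ r" using w0(2) unfolding wi r by simp
    then have "int i < 2 ^ r" by linarith
    then have "int i < int (2 ^ r)" by simp
    then have "i < 2 ^ r" by (simp only: of_nat_less_iff)
    then show ?thesis using r by simp
  qed
  have "(c + 2 ^ n * w) mod 2 ^ K = (c + 2 ^ n * u) mod 2 ^ K"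
  proof -
    have "2 ^ K dvd 2 ^ n * (u - w)"
    proof -
      have "2 ^ (K - n) dvd u - w" unfolding w_def by (simp add: mod_eq_dvd_iff[symmetric])
      then have "2 ^ n * 2 ^ (K - n) dvd 2 ^ n * (u - w)" by (rule mult_dvd_mono[OF dvd_refl])
      moreover have "(2::int) ^ n * 2 ^ (K - n) = 2 ^ K" using K by (simp flip: power_add)
      ultimately show ?thesis by simp
    qed
    then have "2 ^ K dvd (c + 2 ^ n * u) - (c + 2 ^ n * w)" by (simp add: algebra_simps)
    then show ?thesis by (metis mod_eq_dvd_iff)
  qed
  also have "c + 2 ^ n * u = x K" using u by simp
  also have "x K mod 2 ^ K = x K" by (rule Z2_modself[OF x])
  finally show ?thesis using ib unfolding wi by (intro exI[of _ i]) simp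
qed

lemma decomp:
  assumes mo: "odd m" and m2: "2 \<le> m" and x: "x \<in> Z2"
    and ne: "x \<noteq> z2_of_int 0" "x \<noteq> z2_of_int 1" "x \<noteq> z2_of_int (-1)"
  shows "\<exists>J\<in>Eidx (s_of m). x \<in> Epiece (s_of m) J"
proof -
  define s where "s = s_of m"
  have s2: "2 \<le> s" using s_props[OF mo m2] unfolding s_def by blast
  have x1: "x 1 = 0 \<or> x 1 = 1" using Z2_range[OF x, of 1] by auto
  have x21: "x 2 mod 2 = x 1" using Z2_mod[OF x, of 1 2] by simp
  have x2r: "0 \<le> x 2" "x 2 < 4" using Z2_range[OF x, of 2] by auto
  have mem: "x \<in> Epiece s J" if "x (KE s J) = baseE J mod 2 ^ KE s J" for J
    unfolding Epiece_eq coset2_char using x that by simp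
  from x1 show ?thesis
  proof
    assume x10: "x 1 = 0"
    obtain n where n1: "x n = 0 mod 2 ^ n" and n2: "x (Suc n) \<noteq> 0 mod 2 ^ Suc n"
      using first_diff[OF x ne(1)] by blast
    have "n \<noteq> 0" using n2 x10 by (cases n) auto
    then have n: "1 \<le> n" by simp
    obtain i where i: "i < 2 ^ (n + s - n - 1)" "x (n + s) = (0 + 2 ^ n * (1 + 2 * int i)) mod 2 ^ (n + s)"
      using repr_at[OF x n1 n2, of "n + s"] s2 by auto
    have J: "(1, n, i) \<in> Eidx s" unfolding Eidx_def using n i(1) by auto
    have "x \<in> Epiece s (1, n, i)" by (rule mem) (use i in \<open>simp add: KE_def baseE_def eps_def\<close>)
    then show ?thesis using J unfolding s_def by blast
  next
    assume x11: "x 1 = 1"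
    have "x 2 = 1 \<or> x 2 = 3" using x21 x2r x11 by presburger
    then obtain c j where cj: "(c = 1 \<and> j = (2::nat)) \<or> (c = -1 \<and> j = 3)" and x2c: "x 2 = c mod 4"
    proof
      assume "x 2 = 1" then show ?thesis using that[of 1 2] by simp
    next
      assume "x 2 = 3" then show ?thesis using that[of "-1" 3] by simp
    qed
    have nec: "x \<noteq> z2_of_int c" using cj ne by auto
    obtain n where n1: "x n = c mod 2 ^ n" and n2: "x (Suc n) \<noteq> c mod 2 ^ Suc n"
      using first_diff[OF x nec] by blast
    have "n \<noteq> 0"
    proof
      assume "n = 0" then show False using n2 x11 cj by auto
    qed
    moreover have "n \<noteq> 1"
    proof
      assume "n = 1" then show False using n2 x2c by (simp add: numeral_2_eq_2)
    qed
    ultimately have n: "2 \<le> n" by simp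
    obtain i where i: "i < 2 ^ (n + s + 1 - n - 1)" "x (n + s + 1) = (c + 2 ^ n * (1 + 2 * int i)) mod 2 ^ (n + s + 1)"
      using repr_at[OF x n1 n2, of "n + s + 1"] by auto
    have J: "(j, n, i) \<in> Eidx s" unfolding Eidx_def using n i(1) cj by auto
    have "x \<in> Epiece s (j, n, i)" by (rule mem) (use i cj in \<open>auto simp add: KE_def baseE_def eps_def\<close>)
    then show ?thesis using J unfolding s_def by blast
  qed
qed


lemma coset_common:
  assumes x1: "x \<in> coset2 b1 K1" and x2: "x \<in> coset2 b2 K2" and L: "L \<le> K1" "L \<le> K2"
  shows "(2::int) ^ L dvd b1 - b2"
proof -
  have a: "x \<in> Z2" "x K1 = b1 mod 2 ^ K1" using x1 unfolding coset2_char by auto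
  have b: "x K2 = b2 mod 2 ^ K2" using x2 unfolding coset2_char by auto
  have "x L = b1 mod 2 ^ L" using Z2_mod[OF a(1) L(1)] a(2) by (simp add: mod_mod_cancel le_imp_power_dvd L)
  moreover have "x L = b2 mod 2 ^ L" using Z2_mod[OF a(1) L(2)] b by (simp add: mod_mod_cancel le_imp_power_dvd L)
  ultimately have "b1 mod 2 ^ L = b2 mod 2 ^ L" by simp
  then show ?thesis by (simp only: mod_eq_dvd_iff)
qed

lemma z2_in_coset: "z2_of_int c \<in> coset2 c K"
  unfolding coset2_char using z2_of_int_Z2 by (simp add: z2_of_int_def)

lemma NT1: "\<not> (2::int) ^ (n + 1) dvd 2 ^ n * (1 + 2 * int i)"
proof
  assume "(2::int) ^ (n + 1) dvd 2 ^ n * (1 + 2 * int i)"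
  then have "2 ^ n * 2 dvd 2 ^ n * (1 + 2 * int i)" by simp
  then have "(2::int) dvd 1 + 2 * int i" using dvd_mult_cancel_left[of "(2::int) ^ n"] by simp
  then show False by simp
qed

lemma NT2:
  assumes nn: "n \<le> n'" and d: "(2::int) ^ (n + 1) dvd 2 ^ n * (1 + 2 * int i) - 2 ^ n' * (1 + 2 * int i')"
  shows "n = n'"
proof (rule ccontr)
  assume "n \<noteq> n'"
  then have "n + 1 \<le> n'" using nn by simp
  then have "(2::int) ^ (n + 1) dvd 2 ^ n'" by (rule le_imp_power_dvd)
  then have "(2::int) ^ (n + 1) dvd 2 ^ n' * (1 + 2 * int i')" by simp
  then have "(2::int) ^ (n + 1) dvd (2 ^ n * (1 + 2 * int i) - 2 ^ n' * (1 + 2 * int i')) + 2 ^ n' * (1 + 2 * int i')"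
    using d by (rule dvd_add[rotated])
  then show False using NT1[of n i] by simp
qed

lemma NT3:
  assumes t: "1 \<le> t" and d: "(2::int) ^ (n + t) dvd 2 ^ n * (1 + 2 * int i) - 2 ^ n * (1 + 2 * int i')"
    and i: "i < 2 ^ (t - 1)" and i': "i' < 2 ^ (t - 1)"
  shows "i = i'"
proof -
  obtain r where r: "t = Suc r" using t by (cases t) auto
  have "2 ^ n * 2 ^ t dvd 2 ^ n * (2 * (int i - int i'))"
    using d by (simp add: power_add algebra_simps)
  then have "(2::int) ^ t dvd 2 * (int i - int i')" using dvd_mult_cancel_left[of "(2::int) ^ n"] by simp
  then have "2 * 2 ^ r dvd 2 * (int i - int i')" unfolding r by simp
  then have dd: "(2::int) ^ r dvd int i - int i'" using dvd_mult_cancel_left[of "2::int" "2 ^ r" "int i - int i'"] by simp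
  have b: "int i < 2 ^ r" "int i' < 2 ^ r" using i i' unfolding r
    by (metis diff_Suc_1 of_nat_less_iff of_nat_numeral of_nat_power)+
  show ?thesis
  proof (rule ccontr)
    assume "i \<noteq> i'"
    then have "int i - int i' \<noteq> 0" by simp
    then have "\<bar>(2::int) ^ r\<bar> \<le> \<bar>int i - int i'\<bar>" using dd dvd_imp_le_int by blast
    moreover have "\<bar>int i - int i'\<bar> < 2 ^ r" unfolding abs_less_iff using b by linarith
    ultimately show False by linarith
  qed
qed

lemma eps_sep:
  fixes A A' a a' b b' :: int
  assumes j: "j \<in> {1,2,3}" "j' \<in> {1,2,3}" "j \<noteq> j'"
    and A: "A = 2 * a" "j \<noteq> 1 \<Longrightarrow> A = 4 * b" and A': "A' = 2 * a'" "j' \<noteq> 1 \<Longrightarrow> A' = 4 * b'"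
  shows "\<not> 4 dvd (eps j + A) - (eps j' + A')"
  using j A A' unfolding eps_def by (auto; presburger)

lemma A_facts:
  assumes n: "1 \<le> n"
  shows "\<exists>a. (2::int) ^ n * (1 + 2 * int i) = 2 * a"
    and "2 \<le> n \<Longrightarrow> \<exists>b. (2::int) ^ n * (1 + 2 * int i) = 4 * b"
proof -
  obtain r where r: "n = Suc r" using n by (cases n) auto
  show "\<exists>a. (2::int) ^ n * (1 + 2 * int i) = 2 * a" unfolding r by auto
next
  assume "2 \<le> n"
  then obtain r where r: "n = Suc (Suc r)" by (metis add_2_eq_Suc le_Suc_ex)
  show "\<exists>b. (2::int) ^ n * (1 + 2 * int i) = 4 * b" unfolding r by (intro exI[of _ "2 ^ r * (1 + 2 * int i)"]) simp
qed

lemma Eidx_D2: "J \<in> Eidx s \<Longrightarrow> \<exists>j n i. J = (j, n, i) \<and> j \<in> {1,2,3} \<and> 1 \<le> n \<and> (j \<noteq> 1 \<longrightarrow> 2 \<le> n) \<and>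
    i < 2 ^ (KE s J - n - 1) \<and> KE s J = n + s + (if j = 1 then 0 else 1)"
  unfolding Eidx_def KE_def by auto

lemma piece_disj:
  assumes s2: "2 \<le> s" and J: "J \<in> Eidx s" and J': "J' \<in> Eidx s"
    and x: "x \<in> Epiece s J" "x \<in> Epiece s J'"
  shows "J = J'"
proof -
  obtain j n i where Jd: "J = (j, n, i)" "j \<in> {1,2,3}" "1 \<le> n" "j \<noteq> 1 \<longrightarrow> 2 \<le> n"
    "i < 2 ^ (KE s J - n - 1)" "KE s J = n + s + (if j = 1 then 0 else 1)"
    using Eidx_D2[OF J] by blast
  obtain j' n' i' where Jd': "J' = (j', n', i')" "j' \<in> {1,2,3}" "1 \<le> n'" "j' \<noteq> 1 \<longrightarrow> 2 \<le> n'"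
    "i' < 2 ^ (KE s J' - n' - 1)" "KE s J' = n' + s + (if j' = 1 then 0 else 1)"
    using Eidx_D2[OF J'] by blast
  define A where "A = (2::int) ^ n * (1 + 2 * int i)"
  define A' where "A' = (2::int) ^ n' * (1 + 2 * int i')"
  have bJ: "baseE J = eps j + A" unfolding Jd A_def baseE_def by simp
  have bJ': "baseE J' = eps j' + A'" unfolding Jd' A'_def baseE_def by simp
  have xc: "x \<in> coset2 (baseE J) (KE s J)" "x \<in> coset2 (baseE J') (KE s J')"
    using x unfolding Epiece_eq by auto
  have com: "L \<le> KE s J \<Longrightarrow> L \<le> KE s J' \<Longrightarrow> (2::int) ^ L dvd baseE J - baseE J'" for L
    by (rule coset_common[OF xc])
  have jj: "j = j'"
  proof (rule ccontr)
    assume ne: "j \<noteq> j'"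
    obtain a where a: "A = 2 * a" using A_facts(1)[OF Jd(3)] unfolding A_def by blast
    obtain a' where a': "A' = 2 * a'" using A_facts(1)[OF Jd'(3)] unfolding A'_def by blast
    obtain b where b: "j \<noteq> 1 \<Longrightarrow> A = 4 * b"
      using A_facts(2)[OF Jd(3)] Jd(4) unfolding A_def by blast
    obtain b' where b': "j' \<noteq> 1 \<Longrightarrow> A' = 4 * b'"
      using A_facts(2)[OF Jd'(3)] Jd'(4) unfolding A'_def by blast
    have "(2::int) ^ 2 dvd baseE J - baseE J'" by (rule com) (use Jd(6) Jd'(6) s2 in auto)
    then show False using eps_sep[OF Jd(2) Jd'(2) ne a b a' b'] unfolding bJ bJ' by simp
  qed
  have dAA: "L \<le> KE s J \<Longrightarrow> L \<le> KE s J' \<Longrightarrow> (2::int) ^ L dvd A - A'" for L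
    using com[of L] unfolding bJ bJ' jj by simp
  have nn: "n = n'"
  proof (cases "n \<le> n'")
    case True
    have "(2::int) ^ (n + 1) dvd A - A'" by (rule dAA) (use True Jd(6) Jd'(6) s2 in auto)
    then show ?thesis using NT2[OF True] unfolding A_def A'_def by blast
  next
    case False
    have "(2::int) ^ (n' + 1) dvd A - A'" by (rule dAA) (use False Jd(6) Jd'(6) s2 in auto)
    then have "(2::int) ^ (n' + 1) dvd A' - A" by (simp add: dvd_diff_commute)
    then show ?thesis using NT2[of n' n] False unfolding A_def A'_def by auto
  qed
  define t where "t = s + (if j = 1 then 0 else 1)"
  have KK: "KE s J = n + t" "KE s J' = n + t" unfolding t_def using Jd(6) Jd'(6) jj nn by auto
  have "(2::int) ^ (n + t) dvd A - A'" by (rule dAA) (use KK in auto)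
  then have "i = i'" unfolding A_def A'_def nn
    by (rule NT3[rotated]) (use s2 Jd(5) Jd'(5) KK nn t_def in auto)
  then show ?thesis using Jd(1) Jd'(1) jj nn by simp
qed

lemma piece_pts:
  assumes s2: "2 \<le> s" and J: "J \<in> Eidx s" and jc: "jc \<in> {1,2,3}"
  shows "z2_of_int (eps jc) \<notin> Epiece s J"
proof
  assume x: "z2_of_int (eps jc) \<in> Epiece s J"
  obtain j n i where Jd: "J = (j, n, i)" "j \<in> {1,2,3}" "1 \<le> n" "j \<noteq> 1 \<longrightarrow> 2 \<le> n"
    "i < 2 ^ (KE s J - n - 1)" "KE s J = n + s + (if j = 1 then 0 else 1)"
    using Eidx_D2[OF J] by blast
  define A where "A = (2::int) ^ n * (1 + 2 * int i)"
  have bJ: "baseE J = eps j + A" unfolding Jd A_def baseE_def by simp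
  have com: "L \<le> KE s J \<Longrightarrow> (2::int) ^ L dvd eps jc - baseE J" for L
    by (rule coset_common[OF z2_in_coset]) (use x Epiece_eq in auto)
  show False
  proof (cases "j = jc")
    case True
    have "(2::int) ^ (n + 1) dvd eps jc - baseE J" by (rule com) (use Jd(6) s2 in auto)
    then have "(2::int) ^ (n + 1) dvd A" unfolding bJ True by (simp add: dvd_diff_commute)
    then show False using NT1 unfolding A_def by blast
  next
    case False
    obtain a where a: "A = 2 * a" using A_facts(1)[OF Jd(3)] unfolding A_def by blast
    obtain b where b: "j \<noteq> 1 \<Longrightarrow> A = 4 * b"
      using A_facts(2)[OF Jd(3)] Jd(4) unfolding A_def by blast
    have "(2::int) ^ 2 dvd eps jc - baseE J" by (rule com) (use Jd(6) s2 in auto)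
    then show False using eps_sep[OF jc Jd(2), of 0 0 0 A a b] False a b unfolding bJ by simp
  qed
qed


lemma Tz_const: "2 \<le> m \<Longrightarrow> Tz m (z2_of_int c) = z2_of_int (Tg m c)"
  by (rule ext) (simp add: Tz_level z2_of_int_def T_mod)

lemma even_contr:
  assumes me: "even m" and m2: "2 \<le> m" and x: "x \<in> Z2"
    and d: "z2_dist x (z2_of_int 1) < 1"
  shows "z2_dist (Tz m x) (z2_of_int 1) \<le> 1/2 * z2_dist x (z2_of_int 1)"
proof (cases "x = z2_of_int 1")
  case True
  then show ?thesis using Tz_const[OF m2, of 1] by (simp add: T_one z2_dist_def)
next
  case False
  obtain k where k: "m = 2 * k" using me by blast
  obtain g where g: "z2_dist x (z2_of_int 1) = (1/2) ^ g" "x g = z2_of_int 1 g"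
    using dist_exact[OF x z2_of_int_Z2 False] by blast
  have g1: "g \<noteq> 0" using g(1) d by (cases g) auto
  have om: "(1::int) mod 2 ^ g = 1" by (rule mod_pos_pos_trivial) (use g1 in \<open>auto intro: one_less_power\<close>)
  have xg: "x g = 1" using g(2) om unfolding z2_of_int_def by simp
  have "x (Suc g) mod 2 ^ g = x g" by (rule Z2_mod[OF x]) simp
  then have "x (Suc g) mod 2 ^ g = 1 mod 2 ^ g" using xg om by simp
  then have "2 ^ g dvd x (Suc g) - 1" by (simp only: mod_eq_dvd_iff)
  then have "2 ^ (g + 1) dvd Tg m (x (Suc g)) - 1" unfolding k by (rule T_even_step)
  then have "Tz m x (Suc g) = z2_of_int 1 (Suc g)"
    unfolding Tz_level[OF m2] z2_of_int_def by (simp add: mod_eq_dvd_iff)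
  then have "z2_dist (Tz m x) (z2_of_int 1) \<le> (1/2) ^ Suc g"
    by (rule dist_le[OF Tz_Z2[OF m2 x] z2_of_int_Z2])
  then show ?thesis using g(1) by simp
qed

lemma even_iter:
  assumes me: "even m"
  shows "(2::int) ^ k dvd (Tg m ^^ k) y - 1"
proof (induction k)
  case 0 then show ?case by simp
next
  case (Suc k)
  obtain j where j: "m = 2 * j" using me by blast
  have "(2::int) ^ (k + 1) dvd Tg m ((Tg m ^^ k) y) - 1" unfolding j by (rule T_even_step) (use Suc j in simp)
  then show ?case by simp
qed

lemma even_conv:
  assumes me: "even m" and m2: "2 \<le> m" and x: "x \<in> Z2" and e: "0 < e"
  shows "\<exists>K. \<forall>k\<ge>K. z2_dist ((Tz m ^^ k) x) (z2_of_int 1) < e"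
proof -
  obtain K where K: "(1/2::real) ^ K < e" using small_pow[OF e] by blast
  have "z2_dist ((Tz m ^^ k) x) (z2_of_int 1) < e" if k: "K \<le> k" for k
  proof -
    have "((Tz m ^^ k) x) k = (Tg m ^^ k) (x k) mod 2 ^ k" using Tz_pow[OF m2 x] by simp
    also have "\<dots> = 1 mod 2 ^ k" using even_iter[OF me, of k "x k"] by (simp only: mod_eq_dvd_iff)
    finally have "((Tz m ^^ k) x) k = z2_of_int 1 k" unfolding z2_of_int_def .
    then have "z2_dist ((Tz m ^^ k) x) (z2_of_int 1) \<le> (1/2) ^ k"
      by (rule dist_le[OF conjunct1[OF Tz_pow[OF m2 x]] z2_of_int_Z2])
    also have "(1/2::real) ^ k \<le> (1/2) ^ K" by (rule power_decreasing) (use k in auto)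
    finally show ?thesis using K by linarith
  qed
  then show ?thesis by blast
qed

lemma eps_vals: "eps 1 = 0" "eps 2 = 1" "eps 3 = -1"
  unfolding eps_def by auto

theorem theorem2:
  fixes m :: nat
  assumes "m \<ge> 2"
  shows "(even m \<longrightarrow>
            Tz m (z2_of_int 1) = z2_of_int 1
          \<and> (\<exists>r>0. \<exists>c<1. \<forall>x\<in>Z2. z2_dist x (z2_of_int 1) < r \<longrightarrow>
                 z2_dist (Tz m x) (z2_of_int 1) \<le> c * z2_dist x (z2_of_int 1))
          \<and> (\<forall>x\<in>Z2. \<forall>e>0. \<exists>K. \<forall>k\<ge>K. z2_dist ((Tz m ^^ k) x) (z2_of_int 1) < e))
       \<and> (odd m \<longrightarrow>
            s_of m \<ge> 2
          \<and> Z2 = {z2_of_int 0, z2_of_int 1, z2_of_int (-1)} \<union> (\<Union>j\<in>Eidx (s_of m). Epiece (s_of m) j)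
          \<and> (\<forall>j\<in>Eidx (s_of m). Epiece (s_of m) j \<inter> {z2_of_int 0, z2_of_int 1, z2_of_int (-1)} = {})
          \<and> (\<forall>j\<in>Eidx (s_of m). \<forall>j'\<in>Eidx (s_of m). j \<noteq> j' \<longrightarrow>
                 Epiece (s_of m) j \<inter> Epiece (s_of m) j' = {})
          \<and> Tz m (z2_of_int 0) = z2_of_int 0
          \<and> Tz m (z2_of_int 1) = z2_of_int 1
          \<and> Tz m (z2_of_int (-1)) = z2_of_int (-1)
          \<and> (\<forall>j\<in>Eidx (s_of m). Tz m ` Epiece (s_of m) j \<subseteq> Epiece (s_of m) j
                 \<and> minimal_on (Tz m) (Epiece (s_of m) j)))"
proof (intro conjI impI)
  assume me: "even m"
  show "Tz m (z2_of_int 1) = z2_of_int 1" using Tz_const[OF assms, of 1] by (simp add: T_one)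
  show "\<exists>r>0. \<exists>c<1. \<forall>x\<in>Z2. z2_dist x (z2_of_int 1) < r \<longrightarrow>
                 z2_dist (Tz m x) (z2_of_int 1) \<le> c * z2_dist x (z2_of_int 1)"
  proof -
    have "\<forall>x\<in>Z2. z2_dist x (z2_of_int 1) < 1 \<longrightarrow>
                 z2_dist (Tz m x) (z2_of_int 1) \<le> 1/2 * z2_dist x (z2_of_int 1)"
      using even_contr[OF me assms] by blast
    then have "(1::real) > 0 \<and> (1/2::real) < 1 \<and> (\<forall>x\<in>Z2. z2_dist x (z2_of_int 1) < 1 \<longrightarrow>
                 z2_dist (Tz m x) (z2_of_int 1) \<le> 1/2 * z2_dist x (z2_of_int 1))" by simp
    then show ?thesis by blast
  qed
  show "\<forall>x\<in>Z2. \<forall>e>0. \<exists>K. \<forall>k\<ge>K. z2_dist ((Tz m ^^ k) x) (z2_of_int 1) < e"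
    using even_conv[OF me assms] by blast
next
  assume mo: "odd m"
  define s where "s = s_of m"
  have s2: "2 \<le> s" using s_props[OF mo assms] unfolding s_def by blast
  then show "s_of m \<ge> 2" unfolding s_def .
  show "Z2 = {z2_of_int 0, z2_of_int 1, z2_of_int (-1)} \<union> (\<Union>j\<in>Eidx (s_of m). Epiece (s_of m) j)"
  proof (intro equalityI subsetI)
    fix x assume x: "x \<in> Z2"
    show "x \<in> {z2_of_int 0, z2_of_int 1, z2_of_int (-1)} \<union> (\<Union>j\<in>Eidx (s_of m). Epiece (s_of m) j)"
      using decomp[OF mo assms x] by blast
  next
    fix x assume "x \<in> {z2_of_int 0, z2_of_int 1, z2_of_int (-1)} \<union> (\<Union>j\<in>Eidx (s_of m). Epiece (s_of m) j)"
    then show "x \<in> Z2" using z2_of_int_Z2 unfolding Epiece_eq coset2_char by auto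
  qed
  show "\<forall>j\<in>Eidx (s_of m). Epiece (s_of m) j \<inter> {z2_of_int 0, z2_of_int 1, z2_of_int (-1)} = {}"
    using piece_pts[OF s2, of _ 1] piece_pts[OF s2, of _ 2] piece_pts[OF s2, of _ 3]
    unfolding s_def eps_vals by auto
  show "\<forall>j\<in>Eidx (s_of m). \<forall>j'\<in>Eidx (s_of m). j \<noteq> j' \<longrightarrow>
                 Epiece (s_of m) j \<inter> Epiece (s_of m) j' = {}"
    using piece_disj[OF s2] unfolding s_def by blast
  show "Tz m (z2_of_int 0) = z2_of_int 0" using Tz_const[OF assms, of 0] T_zero_odd[OF mo] by simp
  show "Tz m (z2_of_int 1) = z2_of_int 1" using Tz_const[OF assms, of 1] by (simp add: T_one)
  show "Tz m (z2_of_int (-1)) = z2_of_int (-1)" using Tz_const[OF assms, of "-1"] mo by (simp add: T_minus_one)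
  obtain a where a: "m = 2 * a + 1" using mo by (metis oddE)
  have H: "H3 (Tg m)" unfolding H3_def a using T_H3 by blast
  show "\<forall>j\<in>Eidx (s_of m). Tz m ` Epiece (s_of m) j \<subseteq> Epiece (s_of m) j
                 \<and> minimal_on (Tz m) (Epiece (s_of m) j)"
  proof
    fix J assume J: "J \<in> Eidx (s_of m)"
    have K1: "1 \<le> KE (s_of m) J" using s2 unfolding s_def KE_def by (cases J) auto
    have H2: "\<And>x. (2::int) ^ KE (s_of m) J dvd x - baseE J \<Longrightarrow>
        2 ^ (KE (s_of m) J + 1) dvd Tg m x - (x + 2 ^ KE (s_of m) J)"
      by (rule piece_H2[OF mo assms J])
    show "Tz m ` Epiece (s_of m) J \<subseteq> Epiece (s_of m) J \<and> minimal_on (Tz m) (Epiece (s_of m) J)"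
      unfolding Epiece_eq using piece_good[OF assms H K1 H2] by blast
  qed
qed

end
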